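(* Let $F$ be a graph on vertex set $[k]$. Let $(W_n)_n$ be a sequence of graphons $W_n:\Omega^2\to[0,1]$ converging to a graphon $W$ in the cut-norm, and for each $n$ let $\mathfrak{c}_n$ be a fractional $F$-cover of $W_n$. Then every weak$^*$ accumulation point $\mathfrak{c}$ of $(\mathfrak{c}_n)_n$ is a fractional $F$-cover of $W$.
   Context: $(\Omega,\nu)$ is an atomless Borel probability space; a graphon is a symmetric measurable $W:\Omega^2\to[0,1]$. The cut-norm is $\|V\|_\square=\sup_{A,B\subset\Omega}|\int_{A\times B}V|$. Weak$^*$ convergence is in $\mathcal{L}^\infty(\Omega)$ viewed as the dual of $\mathcal{L}^1(\Omega)$: $f_n\to f$ weak$^*$ iff $\int f_ng\to\int fg$ for every $g\in\mathcal{L}^1(\Omega)$. For a graphon $W$, $W^{\otimes F}(x_1,\dots,x_k)=\prod_{ij\in E(F),i<j}W(x_i,x_j)$ and $\mathcal{F}_F(W)=\{W^{\otimes F}\neq0\}$. A fractional $F$-cover of $W$ is a measurable $\mathfrak{c}:\Omega\to[0,1]$ with $\nu^k\big(\mathcal{F}_F(W)\cap\{(x_1,\dots,x_k):\sum_{i=1}^k\mathfrak{c}(x_i)<1\}\big)=0$. *)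

theory Defs
  imports "HOL-Probability.Probability"
begin

definition atomless :: "'a measure \<Rightarrow> bool" where
  "atomless M \<longleftrightarrow> (\<forall>A\<in>sets M. 0 < measure M A \<longrightarrow>
     (\<exists>B\<in>sets M. B \<subseteq> A \<and> 0 < measure M B \<and> measure M B < measure M A))"

definition graphon :: "'a measure \<Rightarrow> ('a \<Rightarrow> 'a \<Rightarrow> real) \<Rightarrow> bool" where
  "graphon M W \<longleftrightarrow> (\<lambda>(x,y). W x y) \<in> borel_measurable (M \<Otimes>\<^sub>M M)
     \<and> (\<forall>x\<in>space M. \<forall>y\<in>space M. W x y = W y x)
     \<and> (\<forall>x\<in>space M. \<forall>y\<in>space M. 0 \<le> W x y \<and> W x y \<le> 1)"

definition cut_norm :: "'a measure \<Rightarrow> ('a \<Rightarrow> 'a \<Rightarrow> real) \<Rightarrow> real" where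
  "cut_norm M V = (SUP AB \<in> sets M \<times> sets M.
     \<bar>LINT z|(M \<Otimes>\<^sub>M M). indicator (fst AB \<times> snd AB) z * V (fst z) (snd z)\<bar>)"

definition graph_on :: "nat \<Rightarrow> (nat \<times> nat) set \<Rightarrow> bool" where
  "graph_on k E \<longleftrightarrow> (\<forall>(i,j)\<in>E. i < j \<and> j < k)"

definition hom_density_fun :: "(nat \<times> nat) set \<Rightarrow> ('a \<Rightarrow> 'a \<Rightarrow> real) \<Rightarrow> (nat \<Rightarrow> 'a) \<Rightarrow> real" where
  "hom_density_fun E W x = (\<Prod>(i,j)\<in>E. W (x i) (x j))"

definition frac_cover ::
  "'a measure \<Rightarrow> nat \<Rightarrow> (nat \<times> nat) set \<Rightarrow> ('a \<Rightarrow> 'a \<Rightarrow> real) \<Rightarrow> ('a \<Rightarrow> real) \<Rightarrow> bool" where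
  "frac_cover M k E W c \<longleftrightarrow> c \<in> borel_measurable M
     \<and> (\<forall>x\<in>space M. 0 \<le> c x \<and> c x \<le> 1)
     \<and> emeasure (PiM {..<k} (\<lambda>_. M))
         {x \<in> space (PiM {..<k} (\<lambda>_. M)). hom_density_fun E W x \<noteq> 0 \<and> (\<Sum>i<k. c (x i)) < 1} = 0"

text \<open>c is a weak* accumulation (cluster) point of the sequence cs in L^infinity = (L^1)^*:
  every basic weak* neighbourhood of c (given by finitely many L^1 functions and eps > 0)
  contains cs n for infinitely many n.\<close>
definition weak_star_acc_point :: "'a measure \<Rightarrow> (nat \<Rightarrow> 'a \<Rightarrow> real) \<Rightarrow> ('a \<Rightarrow> real) \<Rightarrow> bool" where
  "weak_star_acc_point M cs c \<longleftrightarrow>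
     (\<forall>G e N. finite G \<and> (\<forall>g\<in>G. integrable M g) \<and> 0 < e \<longrightarrow>
        (\<exists>n\<ge>N. \<forall>g\<in>G. \<bar>(LINT x|M. cs n x * g x) - (LINT x|M. c x * g x)\<bar> < e))"

end

theory Submission
  imports Defs
begin


lemma semiring_rect:
  fixes M :: "'a measure" and k :: nat
  assumes k: "0 < k"
  shows "semiring_of_sets (PiE {..<k} (\<lambda>_. space M)) {PiE {..<k} X | X. X \<in> (\<Pi> j\<in>{..<k}. sets M)}"
    (is "semiring_of_sets ?\<Omega> ?G")
proof
  show "?G \<subseteq> Pow ?\<Omega>"
  proof
    fix A assume "A \<in> ?G"
    then obtain X where X: "X \<in> (\<Pi> j\<in>{..<k}. sets M)" "A = PiE {..<k} X" by blast
    have "PiE {..<k} X \<subseteq> ?\<Omega>"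
      using X(1) sets.sets_into_space by (intro PiE_mono) auto
    then show "A \<in> Pow ?\<Omega>" using X by auto
  qed
  show "{} \<in> ?G"
    using k by (intro CollectI exI[of _ "\<lambda>_. {}"]) auto
  fix a b assume a: "a \<in> ?G" and b: "b \<in> ?G"
  then obtain X Y where X: "X \<in> (\<Pi> j\<in>{..<k}. sets M)" "a = PiE {..<k} X"
    and Y: "Y \<in> (\<Pi> j\<in>{..<k}. sets M)" "b = PiE {..<k} Y" by blast
  show "a \<inter> b \<in> ?G"
    using X Y by (intro CollectI exI[of _ "\<lambda>i. X i \<inter> Y i"]) (auto simp: PiE_Int)
  define D where "D j = (\<lambda>i. if i < j then X i \<inter> Y i else if i = j then X i - Y i else X i)" for j
  define C where "C = (\<lambda>j. PiE {..<k} (D j)) ` {..<k}"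
  have DG: "D j \<in> (\<Pi> j\<in>{..<k}. sets M)" for j
  proof
    fix i assume "i \<in> {..<k}"
    then have "X i \<in> sets M" "Y i \<in> sets M" using X Y by auto
    then show "D j i \<in> sets M" unfolding D_def by auto
  qed
  have "C \<subseteq> ?G"
  proof
    fix s assume "s \<in> C"
    then obtain j where "s = PiE {..<k} (D j)" unfolding C_def by auto
    then show "s \<in> ?G" using DG[of j] by blast
  qed
  moreover have "finite C" unfolding C_def by auto
  moreover have "disjoint C"
  proof (rule pairwiseI)
    fix s t assume "s \<in> C" "t \<in> C" "s \<noteq> t"
    then obtain j j' where jj0: "j < k" "j' < k" "s = PiE {..<k} (D j)" "t = PiE {..<k} (D j')"
      unfolding C_def by auto
    with \<open>s \<noteq> t\<close> have jj: "j \<noteq> j'"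
      by auto
    show "disjnt s t" unfolding disjnt_def
    proof (rule equals0I)
      fix x assume "x \<in> s \<inter> t"
      then have x: "x \<in> PiE {..<k} (D j)" "x \<in> PiE {..<k} (D j')" using jj0 by auto
      have "min j j' < k" using jj0 by auto
      then have "x (min j j') \<in> D j (min j j')" "x (min j j') \<in> D j' (min j j')"
        using x by (auto intro: PiE_mem)
      then show False using jj unfolding D_def by (auto split: if_splits simp: min_def)
    qed
  qed
  moreover have "a - b = \<Union>C"
  proof
    show "a - b \<subseteq> \<Union>C"
    proof
      fix x assume x: "x \<in> a - b"
      then have xa: "x \<in> PiE {..<k} X" and xb: "x \<notin> PiE {..<k} Y" using X Y by auto
      have ex: "\<exists>i<k. x i \<notin> Y i"
      proof (rule ccontr)
        assume "\<not> ?thesis"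
        then have "x \<in> PiE {..<k} Y" using xa by (auto simp: PiE_iff)
        then show False using xb by simp
      qed
      define j where "j = (LEAST i. i < k \<and> x i \<notin> Y i)"
      have j: "j < k" "x j \<notin> Y j"
        using LeastI_ex[OF ex] unfolding j_def by auto
      have less: "i < j \<Longrightarrow> x i \<in> Y i" for i
        using not_less_Least[of i "\<lambda>i. i < k \<and> x i \<notin> Y i"] j unfolding j_def by auto
      have "x \<in> PiE {..<k} (D j)"
        unfolding PiE_iff
      proof (intro conjI ballI)
        fix i assume i: "i \<in> {..<k}"
        then have "x i \<in> X i" using xa by (auto intro: PiE_mem)
        then show "x i \<in> D j i" using less[of i] j unfolding D_def by auto
      qed (use xa in \<open>simp add: PiE_iff\<close>)
      then show "x \<in> \<Union>C" using j unfolding C_def by auto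
    qed
    show "\<Union>C \<subseteq> a - b"
    proof
      fix x assume "x \<in> \<Union>C"
      then obtain j where j: "j < k" "x \<in> PiE {..<k} (D j)" unfolding C_def by auto
      have "x \<in> PiE {..<k} X"
        unfolding PiE_iff
      proof (intro conjI ballI)
        fix i assume i: "i \<in> {..<k}"
        then have "x i \<in> D j i" using j by (auto intro: PiE_mem)
        then show "x i \<in> X i" unfolding D_def by (auto split: if_splits)
      qed (use j in \<open>simp add: PiE_iff\<close>)
      moreover have "x \<notin> PiE {..<k} Y"
      proof
        assume "x \<in> PiE {..<k} Y"
        then have "x j \<in> Y j" using j by (auto intro: PiE_mem)
        moreover have "x j \<in> D j j" using j by (auto intro: PiE_mem)
        ultimately show False unfolding D_def by auto
      qed
      ultimately show "x \<in> a - b" using X Y by auto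
    qed
  qed
  ultimately show "\<exists>C\<subseteq>?G. finite C \<and> disjoint C \<and> a - b = \<Union>C" by blast
qed



lemma measure_le_from_semiring:
  fixes \<mu>1 \<mu>2 :: "'b measure" and \<Omega> :: "'b set" and G :: "'b set set"
  assumes semi: "semiring_of_sets \<Omega> G" and \<Omega>G: "\<Omega> \<in> G"
    and s1: "sets \<mu>1 = sigma_sets \<Omega> G" and s2: "sets \<mu>2 = sigma_sets \<Omega> G"
    and f1: "finite_measure \<mu>1" and f2: "finite_measure \<mu>2"
    and le: "\<And>R. R \<in> G \<Longrightarrow> emeasure \<mu>2 R \<le> emeasure \<mu>1 R"
    and A: "A \<in> sigma_sets \<Omega> G"
  shows "emeasure \<mu>2 A \<le> emeasure \<mu>1 A"
proof -
  interpret semiring_of_sets \<Omega> G by fact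
  have GS: "G \<subseteq> sigma_sets \<Omega> G" by auto
  define \<nu> where "\<nu> R = emeasure \<mu>1 R - emeasure \<mu>2 R" for R
  have \<nu>add: "\<nu> R + emeasure \<mu>2 R = emeasure \<mu>1 R" if "R \<in> G" for R
    unfolding \<nu>_def using le[OF that] by (rule diff_add_cancel_ennreal)
  have pos: "positive G \<nu>" unfolding positive_def \<nu>_def by simp
  have ca: "countably_additive G \<nu>"
    unfolding countably_additive_def
  proof (intro allI impI)
    fix F :: "nat \<Rightarrow> 'b set" assume F: "range F \<subseteq> G" "disjoint_family F" "(\<Union>i. F i) \<in> G"
    have F1: "range F \<subseteq> sets \<mu>1" "range F \<subseteq> sets \<mu>2" using F(1) GS s1 s2 by auto
    have "(\<Sum>i. \<nu> (F i)) + (\<Sum>i. emeasure \<mu>2 (F i)) = (\<Sum>i. \<nu> (F i) + emeasure \<mu>2 (F i))"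
      by (rule suminf_add) (auto intro: summableI)
    also have "\<dots> = (\<Sum>i. emeasure \<mu>1 (F i))"
      using F(1) \<nu>add by (intro suminf_cong) auto
    also have "\<dots> = emeasure \<mu>1 (\<Union>i. F i)"
      using F1(1) F(2) by (rule suminf_emeasure)
    also have "\<dots> = \<nu> (\<Union>i. F i) + emeasure \<mu>2 (\<Union>i. F i)"
      using \<nu>add[OF F(3)] by simp
    finally have eq: "(\<Sum>i. \<nu> (F i)) + emeasure \<mu>2 (\<Union>i. F i) = \<nu> (\<Union>i. F i) + emeasure \<mu>2 (\<Union>i. F i)"
      using suminf_emeasure[OF F1(2) F(2)] by simp
    have "emeasure \<mu>2 (\<Union>i. F i) \<noteq> \<infinity>"
      using f2 by (simp add: finite_measure.emeasure_finite)
    then show "(\<Sum>i. \<nu> (F i)) = \<nu> (\<Union>i. F i)"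
      using eq ennreal_add_left_cancel[of "emeasure \<mu>2 (\<Union>i. F i)"] by (simp add: add.commute)
  qed
  obtain \<mu>' where \<mu>'G: "\<And>s. s \<in> G \<Longrightarrow> \<mu>' s = \<nu> s" and ms: "measure_space \<Omega> (sigma_sets \<Omega> G) \<mu>'"
    using caratheodory[OF pos ca] by blast
  have sa: "sigma_algebra \<Omega> (sigma_sets \<Omega> G)"
    using space_closed by (rule sigma_algebra_sigma_sets)
  define N where "N = measure_of \<Omega> (sigma_sets \<Omega> G) (\<lambda>A. \<mu>' A + emeasure \<mu>2 A)"
  have posN: "positive (sigma_sets \<Omega> G) (\<lambda>A. \<mu>' A + emeasure \<mu>2 A)"
    using ms unfolding measure_space_def positive_def by simp
  have caN: "countably_additive (sigma_sets \<Omega> G) (\<lambda>A. \<mu>' A + emeasure \<mu>2 A)"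
    unfolding countably_additive_def
  proof (intro allI impI)
    fix F :: "nat \<Rightarrow> 'b set" assume F: "range F \<subseteq> sigma_sets \<Omega> G" "disjoint_family F" "(\<Union>i. F i) \<in> sigma_sets \<Omega> G"
    have c1: "(\<Sum>i. \<mu>' (F i)) = \<mu>' (\<Union>i. F i)"
      using ms F unfolding measure_space_def countably_additive_def by blast
    have c2: "(\<Sum>i. emeasure \<mu>2 (F i)) = emeasure \<mu>2 (\<Union>i. F i)"
      using F s2 by (intro suminf_emeasure) auto
    show "(\<Sum>i. \<mu>' (F i) + emeasure \<mu>2 (F i)) = \<mu>' (\<Union>i. F i) + emeasure \<mu>2 (\<Union>i. F i)"
      by (subst suminf_add[symmetric, where f="\<lambda>i. \<mu>' (F i)"]) (auto intro: summableI simp: c1 c2)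
  qed
  have eN: "emeasure N B = \<mu>' B + emeasure \<mu>2 B" if "B \<in> sigma_sets \<Omega> G" for B
    unfolding N_def using sa posN caN that by (rule emeasure_measure_of_sigma)
  have sN: "sets N = sigma_sets \<Omega> G"
    unfolding N_def using sa by (rule sigma_algebra.sets_measure_of_eq)
  have "\<mu>1 = N"
  proof (rule measure_eqI_generator_eq[where E=G and \<Omega>=\<Omega> and A="\<lambda>_. \<Omega>"])
    show "Int_stable G" unfolding Int_stable_def by auto
    show "G \<subseteq> Pow \<Omega>" by (rule space_closed)
    fix X assume "X \<in> G"
    then show "emeasure \<mu>1 X = emeasure N X"
      using eN[of X] GS \<mu>'G[of X] \<nu>add[of X] by auto
  next
    show "sets \<mu>1 = sigma_sets \<Omega> G" by fact
    show "sets N = sigma_sets \<Omega> G" by fact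
    show "range (\<lambda>_. \<Omega>) \<subseteq> G" using \<Omega>G by auto
    show "(\<Union>i::nat. \<Omega>) = \<Omega>" by simp
    show "emeasure \<mu>1 \<Omega> \<noteq> \<infinity>" for i :: nat
      using f1 by (simp add: finite_measure.emeasure_finite)
  qed
  then have "emeasure \<mu>1 A = \<mu>' A + emeasure \<mu>2 A" using eN[OF A] by simp
  then show ?thesis by (metis add.commute le_iff_add)
qed



lemma (in finite_measure) bounded_integrable:
  fixes f :: "'a \<Rightarrow> real"
  assumes "f \<in> borel_measurable M" "\<And>x. x \<in> space M \<Longrightarrow> \<bar>f x\<bar> \<le> B"
  shows "integrable M f"
  using assms by (intro integrable_const_bound[where B=B]) (auto intro!: AE_I2)

lemma (in prob_space) abs_integral_le:
  fixes f :: "'a \<Rightarrow> real"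
  assumes "f \<in> borel_measurable M" "\<And>x. x \<in> space M \<Longrightarrow> \<bar>f x\<bar> \<le> B"
  shows "\<bar>\<integral>x. f x \<partial>M\<bar> \<le> B"
proof -
  have i: "integrable M f" using assms by (rule bounded_integrable)
  have "\<bar>\<integral>x. f x \<partial>M\<bar> \<le> (\<integral>x. \<bar>f x\<bar> \<partial>M)" by (rule integral_abs_bound)
  also have "\<dots> \<le> (\<integral>x. B \<partial>M)"
    using i assms(2) by (intro integral_mono) auto
  also have "\<dots> = B" by (simp add: prob_space)
  finally show ?thesis .
qed

lemma (in finite_measure) exists_set_bound:
  fixes g \<alpha> :: "'a \<Rightarrow> real"
  assumes g: "integrable M g" and \<alpha>: "\<alpha> \<in> borel_measurable M" "\<And>x. x \<in> space M \<Longrightarrow> 0 \<le> \<alpha> x \<and> \<alpha> x \<le> 1"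
  shows "\<exists>A\<in>sets M. \<bar>\<integral>x. \<alpha> x * g x \<partial>M\<bar> \<le> \<bar>\<integral>x. indicator A x * g x \<partial>M\<bar>"
proof -
  have ia: "integrable M (\<lambda>x. \<alpha> x * g x)"
    using g \<alpha> by (intro Bochner_Integration.integrable_bound[OF g]) (auto intro!: AE_I2 simp: abs_mult mult_left_le_one_le)
  show ?thesis
  proof (cases "0 \<le> (\<integral>x. \<alpha> x * g x \<partial>M)")
    case True
    define A where "A = {x\<in>space M. 0 < g x}"
    have A: "A \<in> sets M" unfolding A_def using g by measurable
    have ib: "integrable M (\<lambda>x. indicator A x * g x)"
      using integrable_real_mult_indicator[OF A g] by (simp add: mult.commute)
    have "(\<integral>x. \<alpha> x * g x \<partial>M) \<le> (\<integral>x. indicator A x * g x \<partial>M)"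
    proof (intro integral_mono[OF ia ib])
      fix x assume x: "x \<in> space M"
      show "\<alpha> x * g x \<le> indicator A x * g x"
      proof (cases "0 < g x")
        case True then show ?thesis using x \<alpha>(2)[OF x] by (simp add: A_def indicator_def mult_left_le_one_le)
      next
        case False then show ?thesis using x \<alpha>(2)[OF x] by (simp add: A_def indicator_def mult_nonneg_nonpos)
      qed
    qed
    then show ?thesis using True A by (intro bexI[of _ A]) auto
  next
    case False
    define A where "A = {x\<in>space M. g x < 0}"
    have A: "A \<in> sets M" unfolding A_def using g by measurable
    have ib: "integrable M (\<lambda>x. indicator A x * g x)"
      using integrable_real_mult_indicator[OF A g] by (simp add: mult.commute)
    have "(\<integral>x. indicator A x * g x \<partial>M) \<le> (\<integral>x. \<alpha> x * g x \<partial>M)"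
    proof (intro integral_mono[OF ib ia])
      fix x assume x: "x \<in> space M"
      show "indicator A x * g x \<le> \<alpha> x * g x"
      proof (cases "g x < 0")
        case True
        have "\<alpha> x * g x \<ge> 1 * g x" using \<alpha>(2)[OF x] True by (intro mult_right_mono_neg) auto
        then show ?thesis using x True by (simp add: A_def indicator_def)
      next
        case False then show ?thesis using x \<alpha>(2)[OF x] by (simp add: A_def indicator_def)
      qed
    qed
    then show ?thesis using False A by (intro bexI[of _ A]) auto
  qed
qed

lemma (in prob_space) cut_norm_bound:
  fixes V :: "'a \<Rightarrow> 'a \<Rightarrow> real" and \<alpha> \<beta> :: "'a \<Rightarrow> real"
  assumes V: "(\<lambda>(x,y). V x y) \<in> borel_measurable (M \<Otimes>\<^sub>M M)"
    and Vb: "\<And>x y. x \<in> space M \<Longrightarrow> y \<in> space M \<Longrightarrow> \<bar>V x y\<bar> \<le> 1"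
    and \<alpha>: "\<alpha> \<in> borel_measurable M" "\<And>x. x \<in> space M \<Longrightarrow> 0 \<le> \<alpha> x \<and> \<alpha> x \<le> 1"
    and \<beta>: "\<beta> \<in> borel_measurable M" "\<And>x. x \<in> space M \<Longrightarrow> 0 \<le> \<beta> x \<and> \<beta> x \<le> 1"
  shows "\<bar>\<integral>z. V (fst z) (snd z) * \<alpha> (fst z) * \<beta> (snd z) \<partial>(M \<Otimes>\<^sub>M M)\<bar> \<le> cut_norm M V"
proof -
  interpret P: pair_prob_space M M ..
  have Vm[measurable]: "(\<lambda>z. V (fst z) (snd z)) \<in> borel_measurable (M \<Otimes>\<^sub>M M)"
    using V by (simp add: case_prod_beta')
  note [measurable] = \<alpha>(1) \<beta>(1)
  have pint: "integrable (M \<Otimes>\<^sub>M M) (\<lambda>(x,y). V x y * a x * b y)"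
    if [measurable]: "a \<in> borel_measurable M" "b \<in> borel_measurable M"
      and ab: "\<And>x. x \<in> space M \<Longrightarrow> \<bar>a x\<bar> \<le> 1" "\<And>x. x \<in> space M \<Longrightarrow> \<bar>b x\<bar> \<le> 1" for a b
  proof (rule P.bounded_integrable[where B=1])
    show "(\<lambda>(x,y). V x y * a x * b y) \<in> borel_measurable (M \<Otimes>\<^sub>M M)" by measurable
    fix z assume "z \<in> space (M \<Otimes>\<^sub>M M)"
    then have "fst z \<in> space M" "snd z \<in> space M" by (auto simp: space_pair_measure)
    then show "\<bar>case z of (x, y) \<Rightarrow> V x y * a x * b y\<bar> \<le> 1"
      using Vb ab by (auto simp: abs_mult case_prod_beta' intro!: mult_le_one)
  qed
  have \<alpha>b: "\<And>x. x \<in> space M \<Longrightarrow> \<bar>\<alpha> x\<bar> \<le> 1" "\<And>x. x \<in> space M \<Longrightarrow> \<bar>\<beta> x\<bar> \<le> 1"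
    using \<alpha>(2) \<beta>(2) by auto
  have indb: "\<And>x. \<bar>indicator A x :: real\<bar> \<le> 1" for A by (simp add: indicator_def)
  define h where "h y = (\<integral>x. V x y * \<alpha> x \<partial>M)" for y
  have "integrable (M \<Otimes>\<^sub>M M) (\<lambda>(x,y). V x y * \<alpha> x * (\<lambda>_. 1) y)"
    by (rule pint) (auto simp: \<alpha>b)
  then have h_int: "integrable M h"
    using P.integrable_snd[of "\<lambda>x y. V x y * \<alpha> x"] unfolding h_def by simp
  have "(\<integral>z. V (fst z) (snd z) * \<alpha> (fst z) * \<beta> (snd z) \<partial>(M \<Otimes>\<^sub>M M))
      = (\<integral>y. (\<integral>x. V x y * \<alpha> x * \<beta> y \<partial>M) \<partial>M)"
    using P.integral_snd[OF pint[OF \<alpha>(1) \<beta>(1) \<alpha>b]] by (simp add: case_prod_beta')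
  also have "\<dots> = (\<integral>y. \<beta> y * h y \<partial>M)"
    unfolding h_def by (simp add: mult.commute)
  finally have e1: "(\<integral>z. V (fst z) (snd z) * \<alpha> (fst z) * \<beta> (snd z) \<partial>(M \<Otimes>\<^sub>M M)) = (\<integral>y. \<beta> y * h y \<partial>M)" .
  obtain B where B: "B \<in> sets M" and hB: "\<bar>\<integral>y. \<beta> y * h y \<partial>M\<bar> \<le> \<bar>\<integral>y. indicator B y * h y \<partial>M\<bar>"
    using exists_set_bound[OF h_int \<beta>] by blast
  note [measurable] = B
  define g where "g x = (\<integral>y. V x y * indicator B y \<partial>M)" for x
  have "integrable (M \<Otimes>\<^sub>M M) (\<lambda>(x,y). V x y * (\<lambda>_. 1) x * indicator B y)"
    by (rule pint) (auto simp: indicator_def)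
  then have g_int: "integrable M g"
    using P.integrable_fst[of "\<lambda>x y. V x y * indicator B y"] unfolding g_def by simp
  have "(\<integral>y. indicator B y * h y \<partial>M) = (\<integral>y. (\<integral>x. V x y * \<alpha> x * indicator B y \<partial>M) \<partial>M)"
    unfolding h_def by (simp add: mult.commute)
  also have "\<dots> = (\<integral>x. (\<integral>y. V x y * \<alpha> x * indicator B y \<partial>M) \<partial>M)"
    using P.Fubini_integral[OF pint[of \<alpha> "indicator B"]] \<alpha>b(1) by (simp add: case_prod_beta' indicator_def)
  also have "\<dots> = (\<integral>x. \<alpha> x * g x \<partial>M)"
    unfolding g_def by (simp add: mult.commute mult.left_commute)
  finally have e2: "(\<integral>y. indicator B y * h y \<partial>M) = (\<integral>x. \<alpha> x * g x \<partial>M)" .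
  obtain A where A: "A \<in> sets M" and gA: "\<bar>\<integral>x. \<alpha> x * g x \<partial>M\<bar> \<le> \<bar>\<integral>x. indicator A x * g x \<partial>M\<bar>"
    using exists_set_bound[OF g_int \<alpha>] by blast
  note [measurable] = A
  have iAB: "integrable (M \<Otimes>\<^sub>M M) (\<lambda>z. indicator (A \<times> B) z * V (fst z) (snd z))"
  proof (rule P.bounded_integrable[where B=1])
    show "(\<lambda>z. indicator (A \<times> B) z * V (fst z) (snd z)) \<in> borel_measurable (M \<Otimes>\<^sub>M M)" by measurable
    fix z assume "z \<in> space (M \<Otimes>\<^sub>M M)"
    then show "\<bar>indicator (A \<times> B) z * V (fst z) (snd z)\<bar> \<le> 1"
      using Vb by (auto simp: space_pair_measure indicator_def)
  qed
  have "(\<integral>x. indicator A x * g x \<partial>M) = (\<integral>x. (\<integral>y. indicator (A \<times> B) (x, y) * V (fst (x,y)) (snd (x,y)) \<partial>M) \<partial>M)"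
  proof (rule Bochner_Integration.integral_cong[OF refl])
    fix x assume "x \<in> space M"
    show "indicator A x * g x = (\<integral>y. indicator (A \<times> B) (x, y) * V (fst (x,y)) (snd (x,y)) \<partial>M)"
    proof (cases "x \<in> A")
      case True
      then show ?thesis unfolding g_def by (auto simp: indicator_def mult.commute intro!: integral_cong)
    next
      case False
      then show ?thesis unfolding g_def by (auto simp: indicator_def)
    qed
  qed
  also have "\<dots> = (\<integral>z. indicator (A \<times> B) z * V (fst z) (snd z) \<partial>(M \<Otimes>\<^sub>M M))"
    by (rule P.integral_fst'[OF iAB])
  finally have e3: "(\<integral>x. indicator A x * g x \<partial>M) = (\<integral>z. indicator (A \<times> B) z * V (fst z) (snd z) \<partial>(M \<Otimes>\<^sub>M M))" .
  have bdd: "bdd_above ((\<lambda>AB. \<bar>LINT z|(M \<Otimes>\<^sub>M M). indicator (fst AB \<times> snd AB) z * V (fst z) (snd z)\<bar>) ` (sets M \<times> sets M))"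
  proof (rule bdd_aboveI2)
    fix AB assume AB: "AB \<in> sets M \<times> sets M"
    show "\<bar>LINT z|(M \<Otimes>\<^sub>M M). indicator (fst AB \<times> snd AB) z * V (fst z) (snd z)\<bar> \<le> 1"
    proof (rule P.abs_integral_le)
      have [measurable]: "fst AB \<in> sets M" "snd AB \<in> sets M" using AB by auto
      show "(\<lambda>z. indicator (fst AB \<times> snd AB) z * V (fst z) (snd z)) \<in> borel_measurable (M \<Otimes>\<^sub>M M)"
        by measurable
      fix z assume "z \<in> space (M \<Otimes>\<^sub>M M)"
      then show "\<bar>indicator (fst AB \<times> snd AB) z * V (fst z) (snd z)\<bar> \<le> 1"
        using Vb by (auto simp: space_pair_measure indicator_def)
    qed
  qed
  have "\<bar>\<integral>z. indicator (A \<times> B) z * V (fst z) (snd z) \<partial>(M \<Otimes>\<^sub>M M)\<bar> \<le> cut_norm M V"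
    unfolding cut_norm_def
    using cSUP_upper[OF _ bdd, of "(A,B)"] A B by auto
  then show ?thesis using e1 hB e2 gA e3 by linarith
qed



lemma PiM_prob:
  assumes "prob_space M" shows "prob_space (PiM I (\<lambda>_. M))"
  using assms by (intro prob_space_PiM) auto

lemma marginal:
  fixes M :: "'a measure" and F :: "(nat \<Rightarrow> 'a) \<Rightarrow> real"
  assumes M: "prob_space M" and i: "i < k"
    and F: "F \<in> borel_measurable (PiM {..<k} (\<lambda>_. M))" and Fb: "\<And>x. \<bar>F x\<bar> \<le> 1"
    and c: "c \<in> borel_measurable M" and cb: "\<And>y. \<bar>c y\<bar> \<le> 1"
  shows "integrable M (\<lambda>y. \<integral>x. F (x(i:=y)) \<partial>PiM ({..<k} - {i}) (\<lambda>_. M))"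
    and "(\<integral>x. F x * c (x i) \<partial>PiM {..<k} (\<lambda>_. M)) = (\<integral>y. c y * (\<integral>x. F (x(i:=y)) \<partial>PiM ({..<k} - {i}) (\<lambda>_. M)) \<partial>M)"
proof -
  let ?I = "{..<k} - {i}"
  have ins: "insert i ?I = {..<k}" using i by auto
  interpret prob_space M by fact
  interpret PS: product_sigma_finite "\<lambda>_. M"
    unfolding product_sigma_finite_def by (simp add: sigma_finite_measure_axioms)
  interpret PI: prob_space "PiM ?I (\<lambda>_. M)" by (rule PiM_prob[OF M])
  interpret PK: prob_space "PiM {..<k} (\<lambda>_. M)" by (rule PiM_prob[OF M])
  interpret PP: pair_prob_space "PiM ?I (\<lambda>_. M)" M ..
  have upd: "(\<lambda>(x, y). x(i := y)) \<in> measurable (PiM ?I (\<lambda>_. M) \<Otimes>\<^sub>M M) (PiM {..<k} (\<lambda>_. M))"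
    using measurable_add_dim[of i ?I "\<lambda>_. M"] unfolding ins .
  have Fu: "(\<lambda>(x,y). F (x(i:=y))) \<in> borel_measurable (PiM ?I (\<lambda>_. M) \<Otimes>\<^sub>M M)"
    using measurable_compose[OF upd F] by (simp add: case_prod_beta' comp_def)
  have cm[measurable]: "(\<lambda>(x,y). c y) \<in> borel_measurable (PiM ?I (\<lambda>_. M) \<Otimes>\<^sub>M M)"
    using c by measurable
  have int2: "integrable (PiM ?I (\<lambda>_. M) \<Otimes>\<^sub>M M) (\<lambda>(x,y). F (x(i:=y)) * c y)"
  proof (rule PP.bounded_integrable[where B=1])
    show "(\<lambda>(x, y). F (x(i := y)) * c y) \<in> borel_measurable (PiM ?I (\<lambda>_. M) \<Otimes>\<^sub>M M)"
      using borel_measurable_times[OF Fu cm] by (simp add: case_prod_beta')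
    show "\<bar>case z of (x, y) \<Rightarrow> F (x(i := y)) * c y\<bar> \<le> 1" for z
      using Fb cb by (auto simp: case_prod_beta' abs_mult intro: mult_le_one)
  qed
  have int1: "integrable (PiM ?I (\<lambda>_. M) \<Otimes>\<^sub>M M) (\<lambda>(x,y). F (x(i:=y)) * 1)"
  proof (rule PP.bounded_integrable[where B=1])
    show "(\<lambda>(x, y). F (x(i := y)) * 1) \<in> borel_measurable (PiM ?I (\<lambda>_. M) \<Otimes>\<^sub>M M)"
      using Fu by (simp add: case_prod_beta')
    show "\<bar>case z of (x, y) \<Rightarrow> F (x(i := y)) * 1\<bar> \<le> 1" for z
      using Fb by (auto simp: case_prod_beta')
  qed
  show "integrable M (\<lambda>y. \<integral>x. F (x(i:=y)) \<partial>PiM ?I (\<lambda>_. M))"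
    using PP.integrable_snd[OF int1] by simp
  have Fc: "(\<lambda>x. F x * c (x i)) \<in> borel_measurable (PiM {..<k} (\<lambda>_. M))"
  proof (rule borel_measurable_times[OF F])
    have "(\<lambda>x. x i) \<in> measurable (PiM {..<k} (\<lambda>_. M)) M" using i by (intro measurable_component_singleton) auto
    from measurable_compose[OF this c] show "(\<lambda>x. c (x i)) \<in> borel_measurable (PiM {..<k} (\<lambda>_. M))" .
  qed
  have intK: "integrable (PiM (insert i ?I) (\<lambda>_. M)) (\<lambda>x. F x * c (x i))"
    unfolding ins
  proof (rule PK.bounded_integrable[where B=1])
    show "(\<lambda>x. F x * c (x i)) \<in> borel_measurable (PiM {..<k} (\<lambda>_. M))" by (rule Fc)
    show "\<bar>F x * c (x i)\<bar> \<le> 1" for x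
      using Fb cb by (auto simp: abs_mult intro: mult_le_one)
  qed
  have "(\<integral>x. F x * c (x i) \<partial>PiM {..<k} (\<lambda>_. M)) = (\<integral>x. F x * c (x i) \<partial>PiM (insert i ?I) (\<lambda>_. M))"
    unfolding ins ..
  also have "\<dots> = (\<integral>x. (\<integral>y. F (x(i:=y)) * c y \<partial>M) \<partial>PiM ?I (\<lambda>_. M))"
    using PS.product_integral_insert[OF _ _ intK] by simp
  also have "\<dots> = (\<integral>y. (\<integral>x. F (x(i:=y)) * c y \<partial>PiM ?I (\<lambda>_. M)) \<partial>M)"
    using PP.Fubini_integral[OF int2] by simp
  also have "\<dots> = (\<integral>y. c y * (\<integral>x. F (x(i:=y)) \<partial>PiM ?I (\<lambda>_. M)) \<partial>M)"
    by (simp add: mult.commute)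
  finally show "(\<integral>x. F x * c (x i) \<partial>PiM {..<k} (\<lambda>_. M)) = (\<integral>y. c y * (\<integral>x. F (x(i:=y)) \<partial>PiM ?I (\<lambda>_. M)) \<partial>M)" .
qed



lemma PiM_prob':
  assumes "prob_space M" shows "prob_space (PiM I (\<lambda>_. M))"
  using assms by (intro prob_space_PiM) auto

lemma meas2:
  assumes Z: "(\<lambda>(p,q). Z p q) \<in> borel_measurable (M \<Otimes>\<^sub>M M)"
    and g1: "g1 \<in> measurable N M" and g2: "g2 \<in> measurable N M"
  shows "(\<lambda>x. Z (g1 x) (g2 x) :: real) \<in> borel_measurable N"
  using measurable_compose[OF measurable_Pair[OF g1 g2] Z] by (simp add: comp_def)

lemma helper_insert:
  fixes f :: "(nat \<Rightarrow> 'a) \<Rightarrow> real"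
  assumes M: "prob_space M" and I: "finite I" "a \<notin> I"
    and f: "f \<in> borel_measurable (PiM (insert a I) (\<lambda>_. M))" and fb: "\<And>x. \<bar>f x\<bar> \<le> B"
  shows "(\<lambda>x. \<integral>s. f (x(a:=s)) \<partial>M) \<in> borel_measurable (PiM I (\<lambda>_. M))"
    and "\<And>x. \<bar>\<integral>s. f (x(a:=s)) \<partial>M\<bar> \<le> B"
    and "(\<integral>x. f x \<partial>PiM (insert a I) (\<lambda>_. M)) = (\<integral>x. (\<integral>s. f (x(a:=s)) \<partial>M) \<partial>PiM I (\<lambda>_. M))"
proof -
  interpret prob_space M by fact
  interpret PS: product_sigma_finite "\<lambda>_. M"
    unfolding product_sigma_finite_def by (simp add: sigma_finite_measure_axioms)
  interpret PK: prob_space "PiM (insert a I) (\<lambda>_. M)" by (rule PiM_prob'[OF M])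
  have upd: "(\<lambda>(x, y). x(a := y)) \<in> measurable (PiM I (\<lambda>_. M) \<Otimes>\<^sub>M M) (PiM (insert a I) (\<lambda>_. M))"
    by (rule measurable_add_dim)
  have Fu: "(\<lambda>(x,y). f (x(a:=y))) \<in> borel_measurable (PiM I (\<lambda>_. M) \<Otimes>\<^sub>M M)"
    using measurable_compose[OF upd f] by (simp add: case_prod_beta' comp_def)
  show "(\<lambda>x. \<integral>s. f (x(a:=s)) \<partial>M) \<in> borel_measurable (PiM I (\<lambda>_. M))"
    using borel_measurable_lebesgue_integral[OF Fu] .
  show "\<bar>\<integral>s. f (x(a:=s)) \<partial>M\<bar> \<le> B" for x
  proof (cases "(\<lambda>s. f (x(a := s))) \<in> borel_measurable M")
    case True
    then show ?thesis by (rule abs_integral_le) (rule fb)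
  next
    case False
    then have "\<not> integrable M (\<lambda>s. f (x(a := s)))" by auto
    then show ?thesis using fb[of x] by (simp add: not_integrable_integral_eq)
  qed
  have "integrable (PiM (insert a I) (\<lambda>_. M)) f"
    using f fb by (rule PK.bounded_integrable)
  then show "(\<integral>x. f x \<partial>PiM (insert a I) (\<lambda>_. M)) = (\<integral>x. (\<integral>s. f (x(a:=s)) \<partial>M) \<partial>PiM I (\<lambda>_. M))"
    by (rule PS.product_integral_insert[OF I])
qed



lemma upd_meas:
  assumes "space M = UNIV"
  shows "(\<lambda>s. (x(a:=s)) j) \<in> measurable M M"
proof (cases "j = a")
  case True then show ?thesis by simp
next
  case False then show ?thesis using assms by simp
qed

lemma comp_meas:
  assumes "j \<in> K"
  shows "(\<lambda>x. x j) \<in> measurable (PiM K (\<lambda>_. M)) M"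
  using assms by (rule measurable_component_singleton)

lemma prod01:
  fixes g :: "'b \<Rightarrow> real"
  assumes "\<And>e. e \<in> S \<Longrightarrow> 0 \<le> g e \<and> g e \<le> 1"
  shows "0 \<le> prod g S \<and> prod g S \<le> 1"
  using assms by (auto intro: prod_nonneg prod_le_1)

lemma edge_lemma:
  fixes M :: "'a measure" and V :: "'a \<Rightarrow> 'a \<Rightarrow> real" and Z :: "nat \<times> nat \<Rightarrow> 'a \<Rightarrow> 'a \<Rightarrow> real"
    and u :: "nat \<Rightarrow> 'a \<Rightarrow> real"
  assumes M: "prob_space M" and sp: "space M = UNIV"
    and ab: "a < b" "b < k"
    and D: "D \<subseteq> {(i,j). i < j \<and> j < k}" "(a,b) \<notin> D"
    and V: "(\<lambda>(x,y). V x y) \<in> borel_measurable (M \<Otimes>\<^sub>M M)" and Vb: "\<And>x y. \<bar>V x y\<bar> \<le> 1"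
    and Z: "\<And>e. e \<in> D \<Longrightarrow> (\<lambda>(x,y). Z e x y) \<in> borel_measurable (M \<Otimes>\<^sub>M M)"
    and Zb: "\<And>e x y. e \<in> D \<Longrightarrow> 0 \<le> Z e x y \<and> Z e x y \<le> 1"
    and u: "\<And>j. j < k \<Longrightarrow> u j \<in> borel_measurable M"
    and ub: "\<And>j s. j < k \<Longrightarrow> 0 \<le> u j s \<and> u j s \<le> 1"
  shows "\<bar>\<integral>x. V (x a) (x b) * (\<Prod>e\<in>D. Z e (x (fst e)) (x (snd e))) * (\<Prod>j<k. u j (x j)) \<partial>PiM {..<k} (\<lambda>_. M)\<bar>
          \<le> cut_norm M V"
proof -
  interpret prob_space M by fact
  interpret P2: pair_prob_space M M ..
  define J where "J = {..<k} - {a,b}"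
  have kJ: "{..<k} = insert a (insert b J)" using ab unfolding J_def by auto
  have aJ: "a \<notin> insert b J" "b \<notin> J" "finite J" "finite (insert b J)" using ab unfolding J_def by auto
  have finD: "finite D" using D(1) by (rule finite_subset) (auto intro: finite_subset[of _ "{..<k} \<times> {..<k}"])
  define f where "f x = V (x a) (x b) * (\<Prod>e\<in>D. Z e (x (fst e)) (x (snd e))) * (\<Prod>j<k. u j (x j))" for x
  have fb: "\<bar>f x\<bar> \<le> 1" for x
  proof -
    have "0 \<le> (\<Prod>e\<in>D. Z e (x (fst e)) (x (snd e))) \<and> (\<Prod>e\<in>D. Z e (x (fst e)) (x (snd e))) \<le> 1"
      using Zb by (intro prod01) auto
    moreover have "0 \<le> (\<Prod>j<k. u j (x j)) \<and> (\<Prod>j<k. u j (x j)) \<le> 1"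
      using ub by (intro prod01) auto
    ultimately show ?thesis unfolding f_def using Vb[of "x a" "x b"]
      by (auto simp: abs_mult intro!: mult_le_one)
  qed
  have fm: "f \<in> borel_measurable (PiM (insert a (insert b J)) (\<lambda>_. M))"
    unfolding f_def kJ[symmetric]
  proof (intro borel_measurable_times borel_measurable_prod)
    show "(\<lambda>x. V (x a) (x b)) \<in> borel_measurable (PiM {..<k} (\<lambda>_. M))"
      using ab by (intro meas2[OF V] comp_meas) auto
    fix e assume "e \<in> D"
    then show "(\<lambda>x. Z e (x (fst e)) (x (snd e))) \<in> borel_measurable (PiM {..<k} (\<lambda>_. M))"
      using D(1) by (intro meas2[OF Z] comp_meas) auto
  next
    fix j assume "j \<in> {..<k}"
    then show "(\<lambda>x. u j (x j)) \<in> borel_measurable (PiM {..<k} (\<lambda>_. M))"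
      using measurable_compose[OF comp_meas[of j "{..<k}" M] u[of j]] by auto
  qed
  define G where "G x = (\<integral>s. f (x(a:=s)) \<partial>M)" for x
  note h1 = helper_insert[OF M aJ(4) aJ(1) fm fb, folded G_def]
  define H where "H x = (\<integral>t. G (x(b:=t)) \<partial>M)" for x
  note h2 = helper_insert[OF M aJ(3) aJ(2) h1(1) h1(2), folded H_def]
  have Hb: "\<bar>H x\<bar> \<le> cut_norm M V" for x
  proof -
    define Db where "Db = {e\<in>D. fst e = b \<or> snd e = b}"
    define \<alpha> where "\<alpha> s = (\<Prod>e\<in>D-Db. Z e ((x(a:=s)) (fst e)) ((x(a:=s)) (snd e))) * u a s * (\<Prod>j\<in>J. u j (x j))" for s
    define \<beta> where "\<beta> t = (\<Prod>e\<in>Db. Z e ((x(b:=t)) (fst e)) ((x(b:=t)) (snd e))) * u b t" for t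
    have Db: "Db \<subseteq> D" unfolding Db_def by auto
    have fact: "f ((x(b:=t))(a:=s)) = V s t * \<alpha> s * \<beta> t" for s t
    proof -
      let ?y = "(x(b:=t))(a:=s)"
      have p1: "(\<Prod>e\<in>D. Z e (?y (fst e)) (?y (snd e))) =
          (\<Prod>e\<in>D-Db. Z e (?y (fst e)) (?y (snd e))) * (\<Prod>e\<in>Db. Z e (?y (fst e)) (?y (snd e)))"
        by (rule prod.subset_diff[OF Db finD])
      have p2: "(\<Prod>e\<in>D-Db. Z e (?y (fst e)) (?y (snd e))) = (\<Prod>e\<in>D-Db. Z e ((x(a:=s)) (fst e)) ((x(a:=s)) (snd e)))"
      proof (rule prod.cong[OF refl])
        fix e assume "e \<in> D - Db"
        then have "fst e \<noteq> b" "snd e \<noteq> b" unfolding Db_def by auto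
        then show "Z e (?y (fst e)) (?y (snd e)) = Z e ((x(a:=s)) (fst e)) ((x(a:=s)) (snd e))" by auto
      qed
      have p3: "(\<Prod>e\<in>Db. Z e (?y (fst e)) (?y (snd e))) = (\<Prod>e\<in>Db. Z e ((x(b:=t)) (fst e)) ((x(b:=t)) (snd e)))"
      proof (rule prod.cong[OF refl])
        fix e assume e: "e \<in> Db"
        then have eD: "e \<in> D" "fst e = b \<or> snd e = b" unfolding Db_def by auto
        then have lt: "fst e < snd e" using D(1) by auto
        have "fst e \<noteq> a"
        proof
          assume "fst e = a"
          then have "snd e = b" using eD(2) ab lt by auto
          then have "e = (a,b)" using \<open>fst e = a\<close> by (cases e) auto
          then show False using eD(1) D(2) by simp
        qed
        moreover have "snd e \<noteq> a" using eD(2) lt ab by auto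
        ultimately show "Z e (?y (fst e)) (?y (snd e)) = Z e ((x(b:=t)) (fst e)) ((x(b:=t)) (snd e))" by auto
      qed
      have p4: "(\<Prod>j<k. u j (?y j)) = u a s * (u b t * (\<Prod>j\<in>J. u j (x j)))"
      proof -
        have "(\<Prod>j<k. u j (?y j)) = u a (?y a) * (u b (?y b) * (\<Prod>j\<in>J. u j (?y j)))"
          unfolding kJ using aJ by (simp add: prod.insert)
        also have "(\<Prod>j\<in>J. u j (?y j)) = (\<Prod>j\<in>J. u j (x j))"
          by (rule prod.cong[OF refl]) (auto simp: J_def)
        finally have F: "(\<Prod>j<k. u j (?y j)) = u a (?y a) * (u b (?y b) * (\<Prod>j\<in>J. u j (x j)))" .
        have ya: "?y a = s" and yb: "?y b = t" using ab by auto
        show ?thesis using F unfolding ya yb .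
      qed
      show ?thesis unfolding f_def p1 p2 p3 p4 \<alpha>_def \<beta>_def using ab by (simp add: ac_simps)
    qed
    have \<alpha>m: "\<alpha> \<in> borel_measurable M"
      unfolding \<alpha>_def
    proof (intro borel_measurable_times borel_measurable_prod borel_measurable_const)
      fix e assume "e \<in> D - Db"
      then show "(\<lambda>s. Z e ((x(a:=s)) (fst e)) ((x(a:=s)) (snd e))) \<in> borel_measurable M"
        by (intro meas2[OF Z] upd_meas sp) auto
    next
      show "u a \<in> borel_measurable M" using ab by (intro u) auto
    qed
    have \<beta>m: "\<beta> \<in> borel_measurable M"
      unfolding \<beta>_def
    proof (intro borel_measurable_times borel_measurable_prod)
      fix e assume "e \<in> Db"
      then show "(\<lambda>s. Z e ((x(b:=s)) (fst e)) ((x(b:=s)) (snd e))) \<in> borel_measurable M"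
        using Db by (intro meas2[OF Z] upd_meas sp) auto
    next
      show "u b \<in> borel_measurable M" using ab by (intro u) auto
    qed
    have J_lt: "j \<in> J \<Longrightarrow> j < k" for j unfolding J_def by auto
    have \<alpha>b: "0 \<le> \<alpha> s \<and> \<alpha> s \<le> 1" for s
    proof -
      have "0 \<le> (\<Prod>e\<in>D-Db. Z e ((x(a:=s)) (fst e)) ((x(a:=s)) (snd e))) \<and> (\<Prod>e\<in>D-Db. Z e ((x(a:=s)) (fst e)) ((x(a:=s)) (snd e))) \<le> 1"
        using Zb by (intro prod01) auto
      moreover have "0 \<le> (\<Prod>j\<in>J. u j (x j)) \<and> (\<Prod>j\<in>J. u j (x j)) \<le> 1"
        using ub J_lt by (intro prod01) auto
      moreover have "0 \<le> u a s \<and> u a s \<le> 1" using ub ab by auto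
      ultimately show ?thesis unfolding \<alpha>_def by (auto intro!: mult_le_one mult_nonneg_nonneg)
    qed
    have \<beta>b: "0 \<le> \<beta> t \<and> \<beta> t \<le> 1" for t
    proof -
      have "0 \<le> (\<Prod>e\<in>Db. Z e ((x(b:=t)) (fst e)) ((x(b:=t)) (snd e))) \<and> (\<Prod>e\<in>Db. Z e ((x(b:=t)) (fst e)) ((x(b:=t)) (snd e))) \<le> 1"
        using Zb Db by (intro prod01) auto
      moreover have "0 \<le> u b t \<and> u b t \<le> 1" using ub ab by auto
      ultimately show ?thesis unfolding \<beta>_def by (auto intro!: mult_le_one mult_nonneg_nonneg)
    qed
    have Vm[measurable]: "(\<lambda>z. V (fst z) (snd z)) \<in> borel_measurable (M \<Otimes>\<^sub>M M)"
      using V by (simp add: case_prod_beta')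
    note [measurable] = \<alpha>m \<beta>m
    have int: "integrable (M \<Otimes>\<^sub>M M) (\<lambda>(s,t). V s t * \<alpha> s * \<beta> t)"
    proof (rule P2.bounded_integrable[where B=1])
      show "(\<lambda>(s,t). V s t * \<alpha> s * \<beta> t) \<in> borel_measurable (M \<Otimes>\<^sub>M M)" by measurable
      show "\<bar>case z of (s,t) \<Rightarrow> V s t * \<alpha> s * \<beta> t\<bar> \<le> 1" for z
        using Vb \<alpha>b \<beta>b by (auto simp: case_prod_beta' abs_mult intro!: mult_le_one)
    qed
    have "H x = (\<integral>t. (\<integral>s. V s t * \<alpha> s * \<beta> t \<partial>M) \<partial>M)"
      unfolding H_def G_def fact ..
    also have "\<dots> = (\<integral>z. V (fst z) (snd z) * \<alpha> (fst z) * \<beta> (snd z) \<partial>(M \<Otimes>\<^sub>M M))"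
      using P2.integral_snd[OF int] by (simp add: case_prod_beta')
    finally have "H x = (\<integral>z. V (fst z) (snd z) * \<alpha> (fst z) * \<beta> (snd z) \<partial>(M \<Otimes>\<^sub>M M))" .
    moreover have "\<bar>\<integral>z. V (fst z) (snd z) * \<alpha> (fst z) * \<beta> (snd z) \<partial>(M \<Otimes>\<^sub>M M)\<bar> \<le> cut_norm M V"
      using V Vb \<alpha>m \<alpha>b \<beta>m \<beta>b by (intro cut_norm_bound) auto
    ultimately show ?thesis by simp
  qed
  interpret PJ: prob_space "PiM J (\<lambda>_. M)" by (rule PiM_prob'[OF M])
  have "(\<integral>x. f x \<partial>PiM {..<k} (\<lambda>_. M)) = (\<integral>x. H x \<partial>PiM J (\<lambda>_. M))"
    unfolding kJ h1(3) h2(3) ..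
  moreover have "\<bar>\<integral>x. H x \<partial>PiM J (\<lambda>_. M)\<bar> \<le> cut_norm M V"
    using h2(1) Hb by (rule PJ.abs_integral_le)
  ultimately show ?thesis unfolding f_def by simp
qed



lemma meas_prodE:
  fixes k :: nat
  assumes "\<And>e. e \<in> S \<Longrightarrow> (\<lambda>(x,y). Y e x y) \<in> borel_measurable (M \<Otimes>\<^sub>M M)"
    and "S \<subseteq> {(i,j). i < j \<and> j < k}"
  shows "(\<lambda>x. \<Prod>e\<in>S. Y e (x (fst e)) (x (snd e)) :: real) \<in> borel_measurable (PiM {..<k} (\<lambda>_. M))"
proof (rule borel_measurable_prod)
  fix e assume e: "e \<in> S"
  have "fst e < snd e" "snd e < k" using e assms(2) by auto
  then show "(\<lambda>x. Y e (x (fst e)) (x (snd e))) \<in> borel_measurable (PiM {..<k} (\<lambda>_. M))"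
    using e by (intro meas2[OF assms(1)] comp_meas) auto
qed

lemma meas_produ:
  fixes k :: nat
  assumes "\<And>j. j < k \<Longrightarrow> u j \<in> borel_measurable M"
  shows "(\<lambda>x. \<Prod>j<k. u j (x j) :: real) \<in> borel_measurable (PiM {..<k} (\<lambda>_. M))"
proof (rule borel_measurable_prod)
  fix j assume "j \<in> {..<k}"
  then show "(\<lambda>x. u j (x j)) \<in> borel_measurable (PiM {..<k} (\<lambda>_. M))"
    using measurable_compose[OF comp_meas[of j "{..<k}" M] assms[of j]] by auto
qed

lemma counting:
  fixes M :: "'a measure" and U W :: "'a \<Rightarrow> 'a \<Rightarrow> real" and Z :: "nat \<times> nat \<Rightarrow> 'a \<Rightarrow> 'a \<Rightarrow> real"
    and u :: "nat \<Rightarrow> 'a \<Rightarrow> real"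
  assumes M: "prob_space M" and sp: "space M = UNIV"
    and E: "finite E" "E \<subseteq> {(i,j). i < j \<and> j < k}"
    and D: "D \<subseteq> {(i,j). i < j \<and> j < k}" "D \<inter> E = {}"
    and U: "(\<lambda>(x,y). U x y) \<in> borel_measurable (M \<Otimes>\<^sub>M M)" and Ub: "\<And>x y. 0 \<le> U x y \<and> U x y \<le> 1"
    and W: "(\<lambda>(x,y). W x y) \<in> borel_measurable (M \<Otimes>\<^sub>M M)" and Wb: "\<And>x y. 0 \<le> W x y \<and> W x y \<le> 1"
    and Z: "\<And>e. e \<in> D \<Longrightarrow> (\<lambda>(x,y). Z e x y) \<in> borel_measurable (M \<Otimes>\<^sub>M M)"
    and Zb: "\<And>e x y. e \<in> D \<Longrightarrow> 0 \<le> Z e x y \<and> Z e x y \<le> 1"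
    and u: "\<And>j. j < k \<Longrightarrow> u j \<in> borel_measurable M"
    and ub: "\<And>j s. j < k \<Longrightarrow> 0 \<le> u j s \<and> u j s \<le> 1"
  shows "\<bar>\<integral>x. ((\<Prod>e\<in>E. U (x (fst e)) (x (snd e))) - (\<Prod>e\<in>E. W (x (fst e)) (x (snd e))))
            * (\<Prod>e\<in>D. Z e (x (fst e)) (x (snd e))) * (\<Prod>j<k. u j (x j)) \<partial>PiM {..<k} (\<lambda>_. M)\<bar>
          \<le> real (card E) * cut_norm M (\<lambda>s t. U s t - W s t)"
  using E D Z Zb
proof (induction E arbitrary: D Z rule: finite_induct)
  case empty
  then show ?case by simp
next
  case (insert e E)
  interpret prob_space M by fact
  interpret PK: prob_space "PiM {..<k} (\<lambda>_. M)" by (rule PiM_prob'[OF M])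
  let ?P = "PiM {..<k} (\<lambda>_. M)"
  have eD: "e \<notin> D" and DE: "D \<inter> E = {}" using insert.prems(3) by auto
  have ek: "fst e < snd e" "snd e < k" using insert.prems(1) by auto
  have Ek: "E \<subseteq> {(i,j). i < j \<and> j < k}" using insert.prems(1) by auto
  define hU where "hU x = (\<Prod>e\<in>E. U (x (fst e)) (x (snd e)))" for x
  define hW where "hW x = (\<Prod>e\<in>E. W (x (fst e)) (x (snd e)))" for x
  define \<Phi> where "\<Phi> x = (\<Prod>e\<in>D. Z e (x (fst e)) (x (snd e)))" for x
  define uu where "uu x = (\<Prod>j<k. u j (x j))" for x
  define Z' where "Z' = Z(e := U)"
  define Z'' where "Z'' = (\<lambda>e'. if e' \<in> E then W else Z e')"
  define V where "V s t = U s t - W s t" for s t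
  have prU: "(\<Prod>e\<in>insert e E. U (x (fst e)) (x (snd e))) = U (x (fst e)) (x (snd e)) * hU x" for x
    unfolding hU_def using insert.hyps by simp
  have prW: "(\<Prod>e\<in>insert e E. W (x (fst e)) (x (snd e))) = W (x (fst e)) (x (snd e)) * hW x" for x
    unfolding hW_def using insert.hyps by simp
  have finD: "finite D" using insert.prems(2) by (rule finite_subset) (auto intro: finite_subset[of _ "{..<k} \<times> {..<k}"])
  have pZ': "(\<Prod>e'\<in>insert e D. Z' e' (x (fst e')) (x (snd e'))) = U (x (fst e)) (x (snd e)) * \<Phi> x" for x
  proof -
    have "(\<Prod>e'\<in>insert e D. Z' e' (x (fst e')) (x (snd e'))) = Z' e (x (fst e)) (x (snd e)) * (\<Prod>e'\<in>D. Z' e' (x (fst e')) (x (snd e')))"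
      using finD eD by simp
    also have "(\<Prod>e'\<in>D. Z' e' (x (fst e')) (x (snd e'))) = \<Phi> x"
      unfolding \<Phi>_def Z'_def using eD by (intro prod.cong) auto
    finally show ?thesis unfolding Z'_def by simp
  qed
  have pZ'': "(\<Prod>e'\<in>E \<union> D. Z'' e' (x (fst e')) (x (snd e'))) = hW x * \<Phi> x" for x
  proof -
    have "(\<Prod>e'\<in>E \<union> D. Z'' e' (x (fst e')) (x (snd e'))) = (\<Prod>e'\<in>E. Z'' e' (x (fst e')) (x (snd e'))) * (\<Prod>e'\<in>D. Z'' e' (x (fst e')) (x (snd e')))"
      using insert.hyps(1) finD DE by (intro prod.union_disjoint) auto
    also have "(\<Prod>e'\<in>E. Z'' e' (x (fst e')) (x (snd e'))) = hW x"
      unfolding hW_def Z''_def by (intro prod.cong) auto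
    also have "(\<Prod>e'\<in>D. Z'' e' (x (fst e')) (x (snd e'))) = \<Phi> x"
      unfolding \<Phi>_def Z''_def using DE by (intro prod.cong) auto
    finally show ?thesis .
  qed
  have split: "(U (x (fst e)) (x (snd e)) * hU x - W (x (fst e)) (x (snd e)) * hW x) * \<Phi> x * uu x
      = (hU x - hW x) * (\<Prod>e'\<in>insert e D. Z' e' (x (fst e')) (x (snd e'))) * uu x
        + V (x (fst e)) (x (snd e)) * (\<Prod>e'\<in>E \<union> D. Z'' e' (x (fst e')) (x (snd e'))) * uu x" for x
    unfolding pZ' pZ'' V_def by (simp add: algebra_simps)
  have Z'm: "e' \<in> insert e D \<Longrightarrow> (\<lambda>(x,y). Z' e' x y) \<in> borel_measurable (M \<Otimes>\<^sub>M M)" for e'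
    unfolding Z'_def using U insert.prems(4) by (cases "e' = e") auto
  have Z'b: "e' \<in> insert e D \<Longrightarrow> 0 \<le> Z' e' x y \<and> Z' e' x y \<le> 1" for e' x y
    unfolding Z'_def using Ub insert.prems(5) by (cases "e' = e") auto
  have Z''m: "e' \<in> E \<union> D \<Longrightarrow> (\<lambda>(x,y). Z'' e' x y) \<in> borel_measurable (M \<Otimes>\<^sub>M M)" for e'
    unfolding Z''_def using W insert.prems(4) by (cases "e' \<in> E") auto
  have Z''b: "e' \<in> E \<union> D \<Longrightarrow> 0 \<le> Z'' e' x y \<and> Z'' e' x y \<le> 1" for e' x y
    unfolding Z''_def using Wb insert.prems(5) by (cases "e' \<in> E") auto
  have hUm: "hU \<in> borel_measurable ?P" unfolding hU_def using U Ek by (intro meas_prodE) auto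
  have hWm: "hW \<in> borel_measurable ?P" unfolding hW_def using W Ek by (intro meas_prodE) auto
  have uum: "uu \<in> borel_measurable ?P" unfolding uu_def using u by (rule meas_produ)
  have Vm: "(\<lambda>(x,y). V x y) \<in> borel_measurable (M \<Otimes>\<^sub>M M)"
    unfolding V_def using U W by (simp add: case_prod_beta')
  have P1m: "(\<lambda>x. \<Prod>e'\<in>insert e D. Z' e' (x (fst e')) (x (snd e'))) \<in> borel_measurable ?P"
    using Z'm insert.prems(2) ek by (intro meas_prodE) auto
  have P2m: "(\<lambda>x. \<Prod>e'\<in>E \<union> D. Z'' e' (x (fst e')) (x (snd e'))) \<in> borel_measurable ?P"
    using Z''m insert.prems(2) Ek by (intro meas_prodE) auto
  have Vem: "(\<lambda>x. V (x (fst e)) (x (snd e))) \<in> borel_measurable ?P"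
    using ek by (intro meas2[OF Vm] comp_meas) auto
  have hUb: "0 \<le> hU x \<and> hU x \<le> 1" for x unfolding hU_def using Ub by (intro prod01) auto
  have hWb: "0 \<le> hW x \<and> hW x \<le> 1" for x unfolding hW_def using Wb by (intro prod01) auto
  have uub: "0 \<le> uu x \<and> uu x \<le> 1" for x unfolding uu_def using ub by (intro prod01) auto
  have P1b: "0 \<le> (\<Prod>e'\<in>insert e D. Z' e' (x (fst e')) (x (snd e'))) \<and> (\<Prod>e'\<in>insert e D. Z' e' (x (fst e')) (x (snd e'))) \<le> 1" for x
    using Z'b by (intro prod01) auto
  have P2b: "0 \<le> (\<Prod>e'\<in>E \<union> D. Z'' e' (x (fst e')) (x (snd e'))) \<and> (\<Prod>e'\<in>E \<union> D. Z'' e' (x (fst e')) (x (snd e'))) \<le> 1" for x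
    using Z''b by (intro prod01) auto
  have Vb: "\<bar>V s t\<bar> \<le> 1" for s t unfolding V_def using Ub[of s t] Wb[of s t] by auto
  have i1: "integrable ?P (\<lambda>x. (hU x - hW x) * (\<Prod>e'\<in>insert e D. Z' e' (x (fst e')) (x (snd e'))) * uu x)"
  proof (rule PK.bounded_integrable[where B=1])
    show "(\<lambda>x. (hU x - hW x) * (\<Prod>e'\<in>insert e D. Z' e' (x (fst e')) (x (snd e'))) * uu x) \<in> borel_measurable ?P"
      using hUm hWm P1m uum by measurable
    show "\<bar>(hU x - hW x) * (\<Prod>e'\<in>insert e D. Z' e' (x (fst e')) (x (snd e'))) * uu x\<bar> \<le> 1" for x
    proof -
      have "\<bar>hU x - hW x\<bar> \<le> 1" using hUb[of x] hWb[of x] by auto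
      then show ?thesis using P1b[of x] uub[of x] by (auto simp: abs_mult intro!: mult_le_one)
    qed
  qed
  have i2: "integrable ?P (\<lambda>x. V (x (fst e)) (x (snd e)) * (\<Prod>e'\<in>E \<union> D. Z'' e' (x (fst e')) (x (snd e'))) * uu x)"
  proof (rule PK.bounded_integrable[where B=1])
    show "(\<lambda>x. V (x (fst e)) (x (snd e)) * (\<Prod>e'\<in>E \<union> D. Z'' e' (x (fst e')) (x (snd e'))) * uu x) \<in> borel_measurable ?P"
      using Vem P2m uum by measurable
    show "\<bar>V (x (fst e)) (x (snd e)) * (\<Prod>e'\<in>E \<union> D. Z'' e' (x (fst e')) (x (snd e'))) * uu x\<bar> \<le> 1" for x
      using Vb[of "x (fst e)" "x (snd e)"] P2b[of x] uub[of x] by (auto simp: abs_mult intro!: mult_le_one)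
  qed
  have IH: "\<bar>\<integral>x. (hU x - hW x) * (\<Prod>e'\<in>insert e D. Z' e' (x (fst e')) (x (snd e'))) * uu x \<partial>?P\<bar>
      \<le> real (card E) * cut_norm M (\<lambda>s t. U s t - W s t)"
    unfolding hU_def hW_def uu_def
  proof (rule insert.IH)
    show "insert e D \<subseteq> {(i, j). i < j \<and> j < k}" using insert.prems(2) ek by auto
    show "insert e D \<inter> E = {}" using DE insert.hyps(2) by auto
  qed (use Ek Z'm Z'b in auto)
  have edge: "\<bar>\<integral>x. V (x (fst e)) (x (snd e)) * (\<Prod>e'\<in>E \<union> D. Z'' e' (x (fst e')) (x (snd e'))) * uu x \<partial>?P\<bar>
      \<le> cut_norm M V"
    unfolding uu_def
  proof (rule edge_lemma[OF M sp ek])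
    show "E \<union> D \<subseteq> {(i, j). i < j \<and> j < k}" using Ek insert.prems(2) by auto
    show "(fst e, snd e) \<notin> E \<union> D" using insert.hyps(2) eD by auto
  qed (use Vm Vb Z''m Z''b u ub in auto)
  have "(\<integral>x. ((\<Prod>e\<in>insert e E. U (x (fst e)) (x (snd e))) - (\<Prod>e\<in>insert e E. W (x (fst e)) (x (snd e))))
            * \<Phi> x * uu x \<partial>?P)
      = (\<integral>x. (hU x - hW x) * (\<Prod>e'\<in>insert e D. Z' e' (x (fst e')) (x (snd e'))) * uu x
        + V (x (fst e)) (x (snd e)) * (\<Prod>e'\<in>E \<union> D. Z'' e' (x (fst e')) (x (snd e'))) * uu x \<partial>?P)"
    unfolding prU prW split ..
  also have "\<dots> = (\<integral>x. (hU x - hW x) * (\<Prod>e'\<in>insert e D. Z' e' (x (fst e')) (x (snd e'))) * uu x \<partial>?P)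
      + (\<integral>x. V (x (fst e)) (x (snd e)) * (\<Prod>e'\<in>E \<union> D. Z'' e' (x (fst e')) (x (snd e'))) * uu x \<partial>?P)"
    using i1 i2 by (rule Bochner_Integration.integral_add)
  finally have eq: "(\<integral>x. ((\<Prod>e\<in>insert e E. U (x (fst e)) (x (snd e))) - (\<Prod>e\<in>insert e E. W (x (fst e)) (x (snd e))))
            * \<Phi> x * uu x \<partial>?P) = (\<integral>x. (hU x - hW x) * (\<Prod>e'\<in>insert e D. Z' e' (x (fst e')) (x (snd e'))) * uu x \<partial>?P)
      + (\<integral>x. V (x (fst e)) (x (snd e)) * (\<Prod>e'\<in>E \<union> D. Z'' e' (x (fst e')) (x (snd e'))) * uu x \<partial>?P)" .
  have cardE: "real (card (insert e E)) = real (card E) + 1" using insert.hyps by simp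
  have VV: "V = (\<lambda>s t. U s t - W s t)" unfolding V_def by auto
  show ?case
    unfolding \<Phi>_def[symmetric] uu_def[symmetric] eq cardE using IH edge unfolding VV
    by (simp add: algebra_simps abs_triangle_ineq[THEN order_trans])
qed



lemma cx_meas:
  assumes "c \<in> borel_measurable M" "i < k"
  shows "(\<lambda>x. c (x i) :: real) \<in> borel_measurable (PiM {..<k} (\<lambda>_. M))"
  using measurable_compose[OF comp_meas[of i "{..<k}" M] assms(1)] assms(2) by auto

lemma expand:
  fixes M :: "'a measure" and h uu :: "(nat \<Rightarrow> 'a) \<Rightarrow> real" and c :: "'a \<Rightarrow> real"
  assumes M: "prob_space M"
    and h: "h \<in> borel_measurable (PiM {..<k} (\<lambda>_. M))" "\<And>x. 0 \<le> h x \<and> h x \<le> 1"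
    and uu: "uu \<in> borel_measurable (PiM {..<k} (\<lambda>_. M))" "\<And>x. 0 \<le> uu x \<and> uu x \<le> 1"
    and c: "c \<in> borel_measurable M" "\<And>s. 0 \<le> c s \<and> c s \<le> 1"
  shows "(\<integral>x. h x * uu x * ((\<Sum>i<k. c (x i)) - 1) \<partial>PiM {..<k} (\<lambda>_. M))
       = (\<Sum>i<k. \<integral>x. h x * uu x * c (x i) \<partial>PiM {..<k} (\<lambda>_. M)) - (\<integral>x. h x * uu x \<partial>PiM {..<k} (\<lambda>_. M))"
proof -
  interpret PK: prob_space "PiM {..<k} (\<lambda>_. M)" by (rule PiM_prob'[OF M])
  let ?P = "PiM {..<k} (\<lambda>_. M)"
  have hu: "0 \<le> h x * uu x \<and> h x * uu x \<le> 1" for x using h(2)[of x] uu(2)[of x] by (auto intro: mult_le_one)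
  have i1: "integrable ?P (\<lambda>x. h x * uu x * c (x i))" if "i < k" for i
  proof (rule PK.bounded_integrable[where B=1])
    show "(\<lambda>x. h x * uu x * c (x i)) \<in> borel_measurable ?P"
      using h(1) uu(1) cx_meas[OF c(1) that] by measurable
    show "\<bar>h x * uu x * c (x i)\<bar> \<le> 1" for x using hu[of x] c(2)[of "x i"] by (auto simp: abs_mult intro: mult_le_one)
  qed
  have i2: "integrable ?P (\<lambda>x. h x * uu x)"
  proof (rule PK.bounded_integrable[where B=1])
    show "(\<lambda>x. h x * uu x) \<in> borel_measurable ?P" using h(1) uu(1) by measurable
    show "\<bar>h x * uu x\<bar> \<le> 1" for x using hu[of x] by auto
  qed
  have "(\<integral>x. h x * uu x * ((\<Sum>i<k. c (x i)) - 1) \<partial>?P) = (\<integral>x. (\<Sum>i<k. h x * uu x * c (x i)) - h x * uu x \<partial>?P)"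
    by (simp add: algebra_simps sum_distrib_left)
  also have "\<dots> = (\<integral>x. (\<Sum>i<k. h x * uu x * c (x i)) \<partial>?P) - (\<integral>x. h x * uu x \<partial>?P)"
    using i1 i2 by (intro Bochner_Integration.integral_diff integrable_sum) auto
  also have "(\<integral>x. (\<Sum>i<k. h x * uu x * c (x i)) \<partial>?P) = (\<Sum>i<k. \<integral>x. h x * uu x * c (x i) \<partial>?P)"
    using i1 by (intro Bochner_Integration.integral_sum) auto
  finally show ?thesis .
qed



lemma prod_upd:
  fixes f :: "nat \<Rightarrow> real"
  assumes "i < k"
  shows "(\<Prod>j<k. if j = i then f j * g else f j) = (\<Prod>j<k. f j) * g"
proof -
  have "(\<Prod>j<k. if j = i then f j * g else f j) = (\<Prod>j<k. f j * (if j = i then g else 1))"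
    by (intro prod.cong) auto
  also have "\<dots> = (\<Prod>j<k. f j) * (\<Prod>j<k. if j = i then g else 1)"
    by (rule prod.distrib)
  also have "(\<Prod>j<k. if j = i then g else 1) = g"
    using assms by (simp add: prod.delta)
  finally show ?thesis .
qed

lemma rect_nonneg:
  fixes M :: "'a measure" and k :: nat and E :: "(nat \<times> nat) set"
    and Ws :: "nat \<Rightarrow> 'a \<Rightarrow> 'a \<Rightarrow> real" and W :: "'a \<Rightarrow> 'a \<Rightarrow> real"
    and cs :: "nat \<Rightarrow> 'a \<Rightarrow> real" and c :: "'a \<Rightarrow> real" and X :: "nat \<Rightarrow> 'a set"
  assumes M: "prob_space M" and sp: "space M = UNIV"
    and E: "E \<subseteq> {(i,j). i < j \<and> j < k}"
    and Wsm: "\<And>n. (\<lambda>(x,y). Ws n x y) \<in> borel_measurable (M \<Otimes>\<^sub>M M)"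
    and Wsb: "\<And>n x y. 0 \<le> Ws n x y \<and> Ws n x y \<le> 1"
    and Wm: "(\<lambda>(x,y). W x y) \<in> borel_measurable (M \<Otimes>\<^sub>M M)"
    and Wb: "\<And>x y. 0 \<le> W x y \<and> W x y \<le> 1"
    and cn: "(\<lambda>n. cut_norm M (\<lambda>x y. Ws n x y - W x y)) \<longlonglongrightarrow> 0"
    and csm: "\<And>n. cs n \<in> borel_measurable M" and csb: "\<And>n s. 0 \<le> cs n s \<and> cs n s \<le> 1"
    and cov: "\<And>n. AE x in PiM {..<k} (\<lambda>_. M). (\<Prod>e\<in>E. Ws n (x (fst e)) (x (snd e))) \<noteq> 0 \<longrightarrow> 1 \<le> (\<Sum>i<k. cs n (x i))"
    and cm: "c \<in> borel_measurable M" and cb: "\<And>s. 0 \<le> c s \<and> c s \<le> 1"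
    and ws: "\<And>G e N. finite G \<Longrightarrow> (\<forall>g\<in>G. integrable M g) \<Longrightarrow> 0 < e \<Longrightarrow>
               \<exists>n\<ge>N. \<forall>g\<in>G. \<bar>(\<integral>x. cs n x * g x \<partial>M) - (\<integral>x. c x * g x \<partial>M)\<bar> < e"
    and X: "\<And>j. j < k \<Longrightarrow> X j \<in> sets M" and k0: "0 < k"
  shows "0 \<le> (\<integral>x. (\<Prod>e\<in>E. W (x (fst e)) (x (snd e))) * (\<Prod>j<k. indicator (X j) (x j)) * ((\<Sum>i<k. c (x i)) - 1) \<partial>PiM {..<k} (\<lambda>_. M))"
proof -
  interpret prob_space M by fact
  interpret PK: prob_space "PiM {..<k} (\<lambda>_. M)" by (rule PiM_prob'[OF M])
  let ?P = "PiM {..<k} (\<lambda>_. M)"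
  have finE: "finite E" using E by (rule finite_subset) (auto intro: finite_subset[of _ "{..<k} \<times> {..<k}"])
  define hW where "hW x = (\<Prod>e\<in>E. W (x (fst e)) (x (snd e)))" for x
  define hWn where "hWn n x = (\<Prod>e\<in>E. Ws n (x (fst e)) (x (snd e)))" for n x
  define uu where "uu x = (\<Prod>j<k. indicator (X j) (x j) :: real)" for x
  define \<delta> where "\<delta> n = cut_norm M (\<lambda>x y. Ws n x y - W x y)" for n
  have hWm: "hW \<in> borel_measurable ?P" unfolding hW_def using Wm E by (intro meas_prodE) auto
  have hWnm: "hWn n \<in> borel_measurable ?P" for n unfolding hWn_def using Wsm E by (intro meas_prodE) auto
  have uum: "uu \<in> borel_measurable ?P" unfolding uu_def using X by (intro meas_produ) auto
  have hWb: "0 \<le> hW x \<and> hW x \<le> 1" for x unfolding hW_def using Wb by (intro prod01) auto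
  have hWnb: "0 \<le> hWn n x \<and> hWn n x \<le> 1" for n x unfolding hWn_def using Wsb by (intro prod01) auto
  have uub: "0 \<le> uu x \<and> uu x \<le> 1" for x unfolding uu_def by (intro prod01) (auto simp: indicator_def)
  define F where "F x = hW x * uu x" for x
  have Fm: "F \<in> borel_measurable ?P" unfolding F_def using hWm uum by measurable
  have Fb: "\<bar>F x\<bar> \<le> 1" for x unfolding F_def using hWb[of x] uub[of x] by (auto simp: abs_mult intro: mult_le_one)
  define h where "h i y = (\<integral>x. F (x(i:=y)) \<partial>PiM ({..<k} - {i}) (\<lambda>_. M))" for i y
  have hint: "integrable M (h i)" if "i < k" for i
    unfolding h_def using marginal(1)[OF M that Fm Fb cm] cb by auto
  have hmarg: "(\<integral>x. hW x * uu x * cc (x i) \<partial>?P) = (\<integral>y. cc y * h i y \<partial>M)"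
    if "i < k" "cc \<in> borel_measurable M" "\<And>s. 0 \<le> cc s \<and> cc s \<le> 1" for i cc
  proof -
    have "\<bar>cc y\<bar> \<le> 1" for y using that(3)[of y] by auto
    from marginal(2)[OF M that(1) Fm Fb that(2) this] show ?thesis unfolding F_def h_def by simp
  qed
  have intg: "integrable ?P f" if "f \<in> borel_measurable ?P" "\<And>x. \<bar>f x\<bar> \<le> 1" for f :: "(nat \<Rightarrow> 'a) \<Rightarrow> real"
    using that by (intro PK.bounded_integrable[where B=1]) auto
  have T_eq: "(\<integral>x. hW x * uu x * ((\<Sum>i<k. c (x i)) - 1) \<partial>?P)
      = (\<Sum>i<k. \<integral>y. c y * h i y \<partial>M) - (\<integral>x. hW x * uu x \<partial>?P)"
    unfolding expand[OF M hWm hWb uum uub cm cb] using hmarg[OF _ cm cb] by simp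
  have A_nonneg: "0 \<le> (\<Sum>i<k. \<integral>x. hWn n x * uu x * cs n (x i) \<partial>?P) - (\<integral>x. hWn n x * uu x \<partial>?P)" for n
  proof -
    have "0 \<le> (\<integral>x. hWn n x * uu x * ((\<Sum>i<k. cs n (x i)) - 1) \<partial>?P)"
    proof (rule integral_nonneg_AE)
      show "AE x in ?P. 0 \<le> hWn n x * uu x * ((\<Sum>i<k. cs n (x i)) - 1)"
        using cov[of n]
      proof eventually_elim
        case (elim x)
        show ?case
        proof (cases "hWn n x = 0")
          case True then show ?thesis by simp
        next
          case False
          then have "1 \<le> (\<Sum>i<k. cs n (x i))" using elim unfolding hWn_def by auto
          then show ?thesis using hWnb[of n x] uub[of x] by (auto intro!: mult_nonneg_nonneg)
        qed
      qed
    qed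
    then show ?thesis unfolding expand[OF M hWnm hWnb uum uub csm csb] .
  qed
  have count: "\<bar>(\<integral>x. hWn n x * uu x * cc (x i) \<partial>?P) - (\<integral>x. hW x * uu x * cc (x i) \<partial>?P)\<bar> \<le> real (card E) * \<delta> n"
    if "i < k" "cc \<in> borel_measurable M" "\<And>s. 0 \<le> cc s \<and> cc s \<le> 1" for n i cc
  proof -
    define u' where "u' j s = (if j = i then indicator (X j) s * cc s else indicator (X j) s :: real)" for j s
    have u'm: "u' j \<in> borel_measurable M" if "j < k" for j
      unfolding u'_def using X[OF that] that(1) \<open>cc \<in> borel_measurable M\<close> by (cases "j = i") auto
    have u'b: "0 \<le> u' j s \<and> u' j s \<le> 1" for j s
      unfolding u'_def using \<open>\<And>s. 0 \<le> cc s \<and> cc s \<le> 1\<close>[of s] by (auto simp: indicator_def)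
    have pu: "(\<Prod>j<k. u' j (x j)) = uu x * cc (x i)" for x
      unfolding u'_def uu_def using prod_upd[OF \<open>i < k\<close>, of "\<lambda>j. indicator (X j) (x j)" "cc (x i)"]
      by (smt (verit) prod.cong)
    have C: "\<bar>\<integral>x. (hWn n x - hW x) * (\<Prod>e\<in>{}. (\<lambda>_ _ _. 0::real) e (x (fst e)) (x (snd e))) * (\<Prod>j<k. u' j (x j)) \<partial>?P\<bar>
        \<le> real (card E) * \<delta> n"
      unfolding hWn_def hW_def \<delta>_def
      by (rule counting[OF M sp finE E _ _ Wsm Wsb Wm Wb]) (use u'm u'b in auto)
    have ccx: "(\<lambda>x. cc (x i)) \<in> borel_measurable ?P" using cx_meas[OF that(2,1)] .
    have b1: "\<bar>hWn n x * uu x * cc (x i)\<bar> \<le> 1" for x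
      using hWnb[of n x] uub[of x] that(3)[of "x i"] by (auto simp: abs_mult intro!: mult_le_one)
    have b2: "\<bar>hW x * uu x * cc (x i)\<bar> \<le> 1" for x
      using hWb[of x] uub[of x] that(3)[of "x i"] by (auto simp: abs_mult intro!: mult_le_one)
    have "(\<integral>x. (hWn n x - hW x) * (\<Prod>e\<in>{}. (\<lambda>_ _ _. 0::real) e (x (fst e)) (x (snd e))) * (\<Prod>j<k. u' j (x j)) \<partial>?P)
        = (\<integral>x. hWn n x * uu x * cc (x i) - hW x * uu x * cc (x i) \<partial>?P)"
      unfolding pu by (simp add: algebra_simps)
    also have "\<dots> = (\<integral>x. hWn n x * uu x * cc (x i) \<partial>?P) - (\<integral>x. hW x * uu x * cc (x i) \<partial>?P)"
    proof (rule Bochner_Integration.integral_diff)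
      show "integrable ?P (\<lambda>x. hWn n x * uu x * cc (x i))"
        by (rule intg) (use hWnm uum ccx b1 in \<open>auto\<close>)
      show "integrable ?P (\<lambda>x. hW x * uu x * cc (x i))"
        by (rule intg) (use hWm uum ccx b2 in \<open>auto\<close>)
    qed
    finally show ?thesis using C by simp
  qed
  have count0: "\<bar>(\<integral>x. hWn n x * uu x \<partial>?P) - (\<integral>x. hW x * uu x \<partial>?P)\<bar> \<le> real (card E) * \<delta> n" if "0 < k" for n
    using count[of 0 "\<lambda>_. (1::real)" n] that by simp
  show ?thesis
  proof (rule ccontr)
    assume "\<not> ?thesis"
    then have Tneg: "(\<Sum>i<k. \<integral>y. c y * h i y \<partial>M) - (\<integral>x. hW x * uu x \<partial>?P) < 0"
      unfolding hW_def[symmetric] uu_def[symmetric] T_eq by simp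
    define T where "T = (\<Sum>i<k. \<integral>y. c y * h i y \<partial>M) - (\<integral>x. hW x * uu x \<partial>?P)"
    define \<eta> where "\<eta> = - T"
    have \<eta>: "0 < \<eta>" using Tneg unfolding \<eta>_def T_def by simp
    define \<epsilon> where "\<epsilon> = \<eta> / (2 * (real k + 1))"
    define r where "r = \<eta> / (2 * (real k + 1) * (real (card E) + 1))"
    have \<epsilon>0: "0 < \<epsilon>" and r0: "0 < r" using \<eta> unfolding \<epsilon>_def r_def by auto
    obtain N where N: "\<And>n. n \<ge> N \<Longrightarrow> norm (\<delta> n - 0) < r"
      using LIMSEQ_D[OF cn[folded \<delta>_def] r0] by blast
    have G: "finite (h ` {..<k})" "\<forall>g\<in>h ` {..<k}. integrable M g" using hint by auto
    obtain n where nN: "n \<ge> N" and nw: "\<forall>g\<in>h ` {..<k}. \<bar>(\<integral>x. cs n x * g x \<partial>M) - (\<integral>x. c x * g x \<partial>M)\<bar> < \<epsilon>"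
      using ws[OF G \<epsilon>0, of N] by blast
    have \<delta>r: "\<delta> n < r" using N[OF nN] by simp
    have cE: "real (card E) * \<delta> n \<le> real (card E) * r" using \<delta>r by (intro mult_left_mono) auto
    have ad: "(\<integral>x. hWn n x * uu x * cs n (x i) \<partial>?P) - (\<integral>y. c y * h i y \<partial>M) \<le> real (card E) * \<delta> n + \<epsilon>"
      if i: "i < k" for i
    proof -
      have "\<bar>(\<integral>x. hWn n x * uu x * cs n (x i) \<partial>?P) - (\<integral>x. hW x * uu x * cs n (x i) \<partial>?P)\<bar> \<le> real (card E) * \<delta> n"
        using count[OF i csm csb] .
      moreover have "(\<integral>x. hW x * uu x * cs n (x i) \<partial>?P) = (\<integral>y. cs n y * h i y \<partial>M)"
        using hmarg[OF i csm csb] .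
      moreover have "\<bar>(\<integral>y. cs n y * h i y \<partial>M) - (\<integral>y. c y * h i y \<partial>M)\<bar> < \<epsilon>"
        using nw i by auto
      ultimately show ?thesis by linarith
    qed
    have "(\<Sum>i<k. \<integral>x. hWn n x * uu x * cs n (x i) \<partial>?P) - (\<Sum>i<k. \<integral>y. c y * h i y \<partial>M)
        = (\<Sum>i<k. (\<integral>x. hWn n x * uu x * cs n (x i) \<partial>?P) - (\<integral>y. c y * h i y \<partial>M))"
      by (simp add: sum_subtractf)
    also have "\<dots> \<le> (\<Sum>i<k. real (card E) * \<delta> n + \<epsilon>)"
      using ad by (intro sum_mono) auto
    also have "\<dots> = real k * (real (card E) * \<delta> n + \<epsilon>)" by simp
    finally have sumb: "(\<Sum>i<k. \<integral>x. hWn n x * uu x * cs n (x i) \<partial>?P) - (\<Sum>i<k. \<integral>y. c y * h i y \<partial>M)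
        \<le> real k * (real (card E) * \<delta> n + \<epsilon>)" .
    have c0: "\<bar>(\<integral>x. hWn n x * uu x \<partial>?P) - (\<integral>x. hW x * uu x \<partial>?P)\<bar> \<le> real (card E) * \<delta> n"
      using count0[OF k0] .
    have An: "0 \<le> (\<Sum>i<k. \<integral>x. hWn n x * uu x * cs n (x i) \<partial>?P) - (\<integral>x. hWn n x * uu x \<partial>?P)"
      by (rule A_nonneg)
    have kb: "real k * (real (card E) * \<delta> n) \<le> real k * (real (card E) * r)"
      using cE by (intro mult_left_mono[OF cE]) auto
    have "-T \<le> real k * (real (card E) * \<delta> n + \<epsilon>) + real (card E) * \<delta> n"
      unfolding T_def using sumb c0 An by linarith
    also have "\<dots> \<le> (real k + 1) * (real (card E) * r) + real k * \<epsilon>"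
      using kb cE unfolding distrib_left distrib_right mult_1_left by linarith
    also have "\<dots> < \<eta> / 2 + \<eta> / 2"
    proof (rule add_strict_mono)
      have a0: "0 < real k + 1" and b0: "0 < real (card E) + 1" by auto
      have ar: "(real k + 1) * r = \<eta> / (2 * (real (card E) + 1))"
        unfolding r_def using a0 b0 by (simp add: divide_simps) (simp add: algebra_simps)
      have "(real k + 1) * (real (card E) * r) = real (card E) * ((real k + 1) * r)" by simp
      also have "\<dots> < (real (card E) + 1) * ((real k + 1) * r)"
        using a0 r0 by (intro mult_strict_right_mono) auto
      also have "\<dots> = \<eta> / 2" unfolding ar using b0 by (simp add: divide_simps)
      finally show "(real k + 1) * (real (card E) * r) < \<eta> / 2" .
      have "real k * \<epsilon> < (real k + 1) * \<epsilon>" using \<epsilon>0 by (intro mult_strict_right_mono) auto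
      also have "\<dots> = \<eta> / 2" unfolding \<epsilon>_def using a0 by (simp add: divide_simps)
      finally show "real k * \<epsilon> < \<eta> / 2" .
    qed
    finally show False unfolding \<eta>_def by simp
  qed
qed



lemma dens_eval:
  fixes g :: "'b \<Rightarrow> real"
  assumes N: "prob_space N" and g: "g \<in> borel_measurable N" "\<And>x. 0 \<le> g x" "\<And>x. g x \<le> B"
    and A: "A \<in> sets N"
  shows "emeasure (density N (\<lambda>x. ennreal (g x))) A = ennreal (\<integral>x. g x * indicator A x \<partial>N)"
proof -
  interpret prob_space N by fact
  have "emeasure (density N (\<lambda>x. ennreal (g x))) A = (\<integral>\<^sup>+x. ennreal (g x) * indicator A x \<partial>N)"
    using emeasure_density[of "\<lambda>x. ennreal (g x)" N A] g(1) A by simp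
  also have "\<dots> = (\<integral>\<^sup>+x. ennreal (g x * indicator A x) \<partial>N)"
    by (intro nn_integral_cong) (auto simp: indicator_def)
  also have "\<dots> = ennreal (\<integral>x. g x * indicator A x \<partial>N)"
  proof (rule nn_integral_eq_integral)
    show "integrable N (\<lambda>x. g x * indicator A x)"
    proof (rule bounded_integrable[where B=B])
      show "(\<lambda>x. g x * indicator A x) \<in> borel_measurable N" using g(1) A by measurable
      show "\<bar>g x * indicator A x\<bar> \<le> B" for x using g(2,3)[of x] by (auto simp: indicator_def)
    qed
    show "AE x in N. 0 \<le> g x * indicator A x" using g(2) by (auto simp: indicator_def)
  qed
  finally show ?thesis .
qed

lemma indicator_PiE_prod:
  fixes k :: nat
  assumes "x \<in> extensional {..<k}"
  shows "indicator (PiE {..<k} X) x = (\<Prod>j<k. indicator (X j) (x j) :: real)"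
proof (cases "\<forall>j<k. x j \<in> X j")
  case True
  then have "x \<in> PiE {..<k} X" using assms by (auto simp: PiE_iff)
  then show ?thesis using True by (simp add: indicator_def)
next
  case False
  then obtain j where j: "j < k" "x j \<notin> X j" by auto
  then have "x \<notin> PiE {..<k} X" by (auto simp: PiE_iff)
  moreover have "(\<Prod>j<k. indicator (X j) (x j) :: real) = 0"
    using j by (intro prod_zero) (auto simp: indicator_def)
  ultimately show ?thesis by simp
qed

lemma cover_from_rect:
  fixes M :: "'a measure" and k :: nat and E :: "(nat \<times> nat) set"
    and W :: "'a \<Rightarrow> 'a \<Rightarrow> real" and c :: "'a \<Rightarrow> real"
  assumes M: "prob_space M" and sp: "space M = UNIV"
    and E: "E \<subseteq> {(i,j). i < j \<and> j < k}"
    and Wm: "(\<lambda>(x,y). W x y) \<in> borel_measurable (M \<Otimes>\<^sub>M M)"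
    and Wb: "\<And>x y. 0 \<le> W x y \<and> W x y \<le> 1"
    and cm: "c \<in> borel_measurable M" and cb: "\<And>s. 0 \<le> c s \<and> c s \<le> 1"
    and k0: "0 < k"
    and rect: "\<And>X. (\<And>j. j < k \<Longrightarrow> X j \<in> sets M) \<Longrightarrow>
       0 \<le> (\<integral>x. (\<Prod>e\<in>E. W (x (fst e)) (x (snd e))) * (\<Prod>j<k. indicator (X j) (x j)) * ((\<Sum>i<k. c (x i)) - 1) \<partial>PiM {..<k} (\<lambda>_. M))"
  shows "emeasure (PiM {..<k} (\<lambda>_. M)) {x\<in>space (PiM {..<k} (\<lambda>_. M)). (\<Prod>e\<in>E. W (x (fst e)) (x (snd e))) \<noteq> 0 \<and> (\<Sum>i<k. c (x i)) < 1} = 0"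
proof -
  interpret prob_space M by fact
  let ?P = "PiM {..<k} (\<lambda>_. M)"
  interpret PK: prob_space ?P by (rule PiM_prob'[OF M])
  define hW where "hW x = (\<Prod>e\<in>E. W (x (fst e)) (x (snd e)))" for x
  define sc where "sc x = (\<Sum>i<k. c (x i))" for x
  have hWm: "hW \<in> borel_measurable ?P" unfolding hW_def using Wm E by (intro meas_prodE) auto
  have hWb: "0 \<le> hW x \<and> hW x \<le> 1" for x unfolding hW_def using Wb by (intro prod01) auto
  have scm: "sc \<in> borel_measurable ?P" unfolding sc_def
    by (intro borel_measurable_sum) (use cx_meas[OF cm] in auto)
  have scb: "0 \<le> sc x \<and> sc x \<le> real k" for x
  proof -
    have "(\<Sum>i<k. c (x i)) \<le> (\<Sum>i<k. 1)" using cb by (intro sum_mono) auto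
    moreover have "0 \<le> (\<Sum>i<k. c (x i))" using cb by (intro sum_nonneg) auto
    ultimately show ?thesis unfolding sc_def by simp
  qed
  define g1 where "g1 x = hW x * sc x" for x
  have g1m: "g1 \<in> borel_measurable ?P" unfolding g1_def using hWm scm by measurable
  have g1b: "0 \<le> g1 x" "g1 x \<le> real k" for x
  proof -
    show "0 \<le> g1 x" unfolding g1_def using hWb[of x] scb[of x] by auto
    have "hW x * sc x \<le> 1 * sc x" using hWb[of x] scb[of x] by (intro mult_right_mono) auto
    then show "g1 x \<le> real k" unfolding g1_def using scb[of x] by simp
  qed
  define \<mu>1 where "\<mu>1 = density ?P (\<lambda>x. ennreal (g1 x))"
  define \<mu>2 where "\<mu>2 = density ?P (\<lambda>x. ennreal (hW x))"
  have e1: "emeasure \<mu>1 A = ennreal (\<integral>x. g1 x * indicator A x \<partial>?P)" if "A \<in> sets ?P" for A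
    unfolding \<mu>1_def using PK.prob_space_axioms g1m g1b that by (rule dens_eval)
  have e2: "emeasure \<mu>2 A = ennreal (\<integral>x. hW x * indicator A x \<partial>?P)" if "A \<in> sets ?P" for A
    unfolding \<mu>2_def by (rule dens_eval[OF PK.prob_space_axioms hWm, where B=1]) (use hWb that in auto)
  define \<Omega> where "\<Omega> = PiE {..<k} (\<lambda>_. space M)"
  define G where "G = {PiE {..<k} X | X. X \<in> (\<Pi> j\<in>{..<k}. sets M)}"
  have semi: "semiring_of_sets \<Omega> G" unfolding \<Omega>_def G_def using k0 by (rule semiring_rect)
  have \<Omega>G: "\<Omega> \<in> G" unfolding \<Omega>_def G_def by auto
  have spP: "space ?P = \<Omega>" unfolding \<Omega>_def by (simp add: space_PiM)
  have setsP: "sets ?P = sigma_sets \<Omega> G"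
    unfolding sets_PiM spP[symmetric] G_def by (simp add: prod_algebra_eq_finite space_PiM)
  have s1: "sets \<mu>1 = sigma_sets \<Omega> G" unfolding \<mu>1_def using setsP by simp
  have s2: "sets \<mu>2 = sigma_sets \<Omega> G" unfolding \<mu>2_def using setsP by simp
  have f1: "finite_measure \<mu>1"
    by (rule finite_measureI) (simp add: \<mu>1_def e1[OF sets.top, unfolded \<mu>1_def])
  have f2: "finite_measure \<mu>2"
    by (rule finite_measureI) (simp add: \<mu>2_def e2[OF sets.top, unfolded \<mu>2_def])
  have le: "emeasure \<mu>2 R \<le> emeasure \<mu>1 R" if R: "R \<in> G" for R
  proof -
    obtain X where X: "X \<in> (\<Pi> j\<in>{..<k}. sets M)" "R = PiE {..<k} X" using R unfolding G_def by blast
    have RP: "R \<in> sets ?P" using R setsP by auto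
    define uu where "uu x = (\<Prod>j<k. indicator (X j) (x j) :: real)" for x
    have ind: "indicator R x = uu x" if "x \<in> space ?P" for x
      unfolding X(2) uu_def using that by (intro indicator_PiE_prod) (auto simp: space_PiM PiE_def)
    have uum: "uu \<in> borel_measurable ?P" unfolding uu_def
      by (intro meas_produ borel_measurable_indicator) (use X(1) in auto)
    have uub: "0 \<le> uu x \<and> uu x \<le> 1" for x unfolding uu_def by (intro prod01) (auto simp: indicator_def)
    have r: "0 \<le> (\<integral>x. hW x * uu x * (sc x - 1) \<partial>?P)"
      using rect[of X] X(1) unfolding hW_def uu_def sc_def by auto
    have ia: "integrable ?P (\<lambda>x. hW x * uu x * sc x)"
    proof (rule PK.bounded_integrable[where B="real k"])
      show "(\<lambda>x. hW x * uu x * sc x) \<in> borel_measurable ?P" using hWm uum scm by measurable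
      show "\<bar>hW x * uu x * sc x\<bar> \<le> real k" for x
      proof -
        have a: "hW x * uu x \<le> 1" "0 \<le> hW x * uu x" using hWb[of x] uub[of x] by (auto intro: mult_le_one)
        have "hW x * uu x * sc x \<le> 1 * sc x" using a scb[of x] by (intro mult_right_mono) auto
        moreover have "0 \<le> hW x * uu x * sc x" using a scb[of x] by auto
        ultimately show ?thesis using scb[of x] by simp
      qed
    qed
    have ib: "integrable ?P (\<lambda>x. hW x * uu x)"
    proof (rule PK.bounded_integrable[where B=1])
      show "(\<lambda>x. hW x * uu x) \<in> borel_measurable ?P" using hWm uum by measurable
      show "\<bar>hW x * uu x\<bar> \<le> 1" for x using hWb[of x] uub[of x] by (auto intro: mult_le_one)
    qed
    have "(\<integral>x. hW x * uu x * (sc x - 1) \<partial>?P) = (\<integral>x. hW x * uu x * sc x - hW x * uu x \<partial>?P)"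
      by (simp add: algebra_simps)
    also have "\<dots> = (\<integral>x. hW x * uu x * sc x \<partial>?P) - (\<integral>x. hW x * uu x \<partial>?P)"
      using ia ib by (rule Bochner_Integration.integral_diff)
    finally have ineq: "(\<integral>x. hW x * uu x \<partial>?P) \<le> (\<integral>x. hW x * uu x * sc x \<partial>?P)" using r by linarith
    have c1: "(\<integral>x. g1 x * indicator R x \<partial>?P) = (\<integral>x. hW x * uu x * sc x \<partial>?P)"
      by (rule Bochner_Integration.integral_cong[OF refl]) (simp add: ind g1_def)
    have c2: "(\<integral>x. hW x * indicator R x \<partial>?P) = (\<integral>x. hW x * uu x \<partial>?P)"
      by (rule Bochner_Integration.integral_cong[OF refl]) (simp add: ind)
    show ?thesis unfolding e1[OF RP] e2[OF RP] c1 c2 using ineq by (simp add: ennreal_leI)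
  qed
  define S where "S = {x\<in>space ?P. hW x \<noteq> 0 \<and> sc x < 1}"
  have SP: "S \<in> sets ?P" unfolding S_def using hWm scm by measurable
  have "emeasure \<mu>2 S \<le> emeasure \<mu>1 S"
    using measure_le_from_semiring[OF semi \<Omega>G s1 s2 f1 f2 le] SP setsP by auto
  then have "ennreal (\<integral>x. hW x * indicator S x \<partial>?P) \<le> ennreal (\<integral>x. g1 x * indicator S x \<partial>?P)"
    using e1[OF SP] e2[OF SP] by simp
  moreover have "0 \<le> (\<integral>x. g1 x * indicator S x \<partial>?P)"
    using g1b by (intro Bochner_Integration.integral_nonneg) (auto simp: indicator_def)
  ultimately have ineq: "(\<integral>x. hW x * indicator S x \<partial>?P) \<le> (\<integral>x. g1 x * indicator S x \<partial>?P)" by simp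
  define d where "d x = hW x * (1 - sc x) * indicator S x" for x
  have dm: "d \<in> borel_measurable ?P" unfolding d_def using hWm scm SP by measurable
  have d0: "0 \<le> d x" for x
    using hWb[of x] unfolding d_def S_def by (auto simp: indicator_def)
  have dpos: "x \<in> S \<Longrightarrow> 0 < d x" for x
    using hWb[of x] unfolding d_def S_def by (auto simp: indicator_def)
  have i1: "integrable ?P (\<lambda>x. hW x * indicator S x)"
  proof (rule PK.bounded_integrable[where B=1])
    show "(\<lambda>x. hW x * indicator S x) \<in> borel_measurable ?P" using hWm SP by measurable
    show "\<bar>hW x * indicator S x\<bar> \<le> 1" for x using hWb[of x] by (auto simp: indicator_def)
  qed
  have i2: "integrable ?P (\<lambda>x. g1 x * indicator S x)"
  proof (rule PK.bounded_integrable[where B="real k"])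
    show "(\<lambda>x. g1 x * indicator S x) \<in> borel_measurable ?P" using g1m SP by measurable
    show "\<bar>g1 x * indicator S x\<bar> \<le> real k" for x using g1b[of x] by (auto simp: indicator_def)
  qed
  have "(\<integral>x. d x \<partial>?P) = (\<integral>x. hW x * indicator S x - g1 x * indicator S x \<partial>?P)"
    unfolding d_def g1_def by (simp add: algebra_simps)
  also have "\<dots> = (\<integral>x. hW x * indicator S x \<partial>?P) - (\<integral>x. g1 x * indicator S x \<partial>?P)"
    using i1 i2 by (rule Bochner_Integration.integral_diff)
  finally have "(\<integral>x. d x \<partial>?P) \<le> 0" using ineq by linarith
  moreover have "0 \<le> (\<integral>x. d x \<partial>?P)" using d0 by (intro Bochner_Integration.integral_nonneg) auto
  ultimately have "(\<integral>x. d x \<partial>?P) = 0" by linarith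
  moreover have di: "integrable ?P d"
  proof (rule PK.bounded_integrable[where B=1])
    show "d \<in> borel_measurable ?P" by (rule dm)
    show "\<bar>d x\<bar> \<le> 1" for x
      using hWb[of x] scb[of x] unfolding d_def S_def by (auto simp: indicator_def abs_mult intro!: mult_le_one)
  qed
  ultimately have "AE x in ?P. d x = 0"
    using integral_nonneg_eq_0_iff_AE[OF di] d0 by auto
  then have "AE x in ?P. x \<notin> S" by eventually_elim (use dpos in force)
  then have "emeasure ?P S = 0"
    using AE_iff_measurable[OF SP, of "\<lambda>x. x \<notin> S"] unfolding S_def by auto
  then show ?thesis unfolding S_def hW_def sc_def .
qed



theorem theorem3p14:
  fixes M :: "'a::polish_space measure"
    and k :: nat and E :: "(nat \<times> nat) set"
    and Ws :: "nat \<Rightarrow> 'a \<Rightarrow> 'a \<Rightarrow> real" and W :: "'a \<Rightarrow> 'a \<Rightarrow> real"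
    and cs :: "nat \<Rightarrow> 'a \<Rightarrow> real" and c :: "'a \<Rightarrow> real"
  assumes "prob_space M" and "sets M = sets borel" and "atomless M"
    and "graph_on k E"
    and "\<And>n. graphon M (Ws n)" and "graphon M W"
    and "(\<lambda>n. cut_norm M (\<lambda>x y. Ws n x y - W x y)) \<longlonglongrightarrow> 0"
    and "\<And>n. frac_cover M k E (Ws n) (cs n)"
    and "c \<in> borel_measurable M" and "\<exists>B. AE x in M. \<bar>c x\<bar> \<le> B"
    and "weak_star_acc_point M cs c"
  shows "\<exists>c'. (AE x in M. c' x = c x) \<and> frac_cover M k E W c'"
proof -
  note M = assms(1)
  interpret prob_space M by (rule M)
  let ?P = "PiM {..<k} (\<lambda>_. M)"
  interpret PK: prob_space ?P by (rule PiM_prob'[OF M])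
  have sp: "space M = UNIV" using sets_eq_imp_space_eq[OF assms(2)] by simp
  have E: "E \<subseteq> {(i,j). i < j \<and> j < k}" using assms(4) unfolding graph_on_def by auto
  have Wsm: "(\<lambda>(x,y). Ws n x y) \<in> borel_measurable (M \<Otimes>\<^sub>M M)" for n
    using assms(5)[of n] unfolding graphon_def by auto
  have Wsb: "0 \<le> Ws n x y \<and> Ws n x y \<le> 1" for n x y
    using assms(5)[of n] sp unfolding graphon_def by auto
  have Wm: "(\<lambda>(x,y). W x y) \<in> borel_measurable (M \<Otimes>\<^sub>M M)"
    using assms(6) unfolding graphon_def by auto
  have Wb: "0 \<le> W x y \<and> W x y \<le> 1" for x y
    using assms(6) sp unfolding graphon_def by auto
  have csm: "cs n \<in> borel_measurable M" for n using assms(8)[of n] unfolding frac_cover_def by auto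
  have csb: "0 \<le> cs n s \<and> cs n s \<le> 1" for n s using assms(8)[of n] sp unfolding frac_cover_def by auto
  have hom_eq: "hom_density_fun E Y x = (\<Prod>e\<in>E. Y (x (fst e)) (x (snd e)))" for Y and x :: "nat \<Rightarrow> 'a"
    unfolding hom_density_fun_def by (simp add: case_prod_beta')
  have null: "emeasure ?P {x\<in>space ?P. (\<Prod>e\<in>E. Ws n (x (fst e)) (x (snd e))) \<noteq> 0 \<and> (\<Sum>i<k. cs n (x i)) < 1} = 0" for n
    using assms(8)[of n] unfolding frac_cover_def hom_eq by auto
  have k0: "0 < k"
  proof (rule ccontr)
    assume "\<not> 0 < k"
    then have k: "k = 0" by simp
    then have "E = {}" using E by auto
    then have "{x\<in>space ?P. (\<Prod>e\<in>E. Ws 0 (x (fst e)) (x (snd e))) \<noteq> 0 \<and> (\<Sum>i<k. cs 0 (x i)) < 1} = space ?P"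
      using k by auto
    then show False using null[of 0] PK.emeasure_space_1 by simp
  qed
  have cov: "AE x in ?P. (\<Prod>e\<in>E. Ws n (x (fst e)) (x (snd e))) \<noteq> 0 \<longrightarrow> 1 \<le> (\<Sum>i<k. cs n (x i))" for n
  proof -
    have hm: "(\<lambda>x. \<Prod>e\<in>E. Ws n (x (fst e)) (x (snd e))) \<in> borel_measurable ?P"
      using Wsm E by (intro meas_prodE) auto
    have sm: "(\<lambda>x. \<Sum>i<k. cs n (x i)) \<in> borel_measurable ?P"
      by (intro borel_measurable_sum) (use cx_meas[OF csm] in auto)
    have Sm: "{x\<in>space ?P. (\<Prod>e\<in>E. Ws n (x (fst e)) (x (snd e))) \<noteq> 0 \<and> (\<Sum>i<k. cs n (x i)) < 1} \<in> sets ?P"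
      using hm sm by measurable
    show ?thesis
      using AE_iff_measurable[OF Sm] null[of n] by (auto simp: not_le)
  qed
  obtain B where B: "AE x in M. \<bar>c x\<bar> \<le> B" using assms(10) by blast
  have cint: "integrable M c" using B assms(9) by (intro integrable_const_bound[where B=B]) auto
  have ws: "\<And>G e N. finite G \<Longrightarrow> (\<forall>g\<in>G. integrable M g) \<Longrightarrow> 0 < e \<Longrightarrow>
               \<exists>n\<ge>N. \<forall>g\<in>G. \<bar>(\<integral>x. cs n x * g x \<partial>M) - (\<integral>x. c x * g x \<partial>M)\<bar> < e"
    using assms(11) unfolding weak_star_acc_point_def by blast
  have wsg: "\<exists>n. \<bar>(\<integral>x. cs n x * g x \<partial>M) - (\<integral>x. c x * g x \<partial>M)\<bar> < e" if "integrable M g" "0 < e" for g e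
    using ws[of "{g}" e 0] that by auto
  note [measurable] = assms(9)
  have cge: "AE x in M. 0 \<le> c x"
  proof -
    define A where "A = {x\<in>space M. c x < 0}"
    have A: "A \<in> sets M" unfolding A_def by measurable
    have gi: "integrable M (indicator A :: 'a \<Rightarrow> real)" using A by (intro integrable_real_indicator) (auto simp: less_top[symmetric])
    have ci: "integrable M (\<lambda>x. c x * indicator A x)" using integrable_real_mult_indicator[OF A cint] .
    have "0 \<le> (\<integral>x. c x * indicator A x \<partial>M)"
    proof (rule field_le_epsilon)
      fix e :: real assume e: "0 < e"
      obtain n where n: "\<bar>(\<integral>x. cs n x * indicator A x \<partial>M) - (\<integral>x. c x * indicator A x \<partial>M)\<bar> < e"
        using wsg[OF gi e] by blast
      have "0 \<le> (\<integral>x. cs n x * indicator A x \<partial>M)"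
        using csb by (intro Bochner_Integration.integral_nonneg) (auto simp: indicator_def)
      then show "0 \<le> (\<integral>x. c x * indicator A x \<partial>M) + e" using n by linarith
    qed
    moreover have "0 \<le> (\<integral>x. - (c x * indicator A x) \<partial>M)"
      by (intro Bochner_Integration.integral_nonneg) (auto simp: A_def indicator_def sp)
    ultimately have "(\<integral>x. - (c x * indicator A x) \<partial>M) = 0" by simp
    moreover have "AE x in M. 0 \<le> - (c x * indicator A x)" by (auto simp: A_def indicator_def sp)
    ultimately have "AE x in M. - (c x * indicator A x) = 0"
      using integral_nonneg_eq_0_iff_AE[of M "\<lambda>x. - (c x * indicator A x)"] ci by auto
    then show ?thesis by eventually_elim (auto simp: A_def indicator_def sp split: if_splits)
  qed
  have cle: "AE x in M. c x \<le> 1"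
  proof -
    define A where "A = {x\<in>space M. 1 < c x}"
    have A: "A \<in> sets M" unfolding A_def by measurable
    have gi: "integrable M (indicator A :: 'a \<Rightarrow> real)" using A by (intro integrable_real_indicator) (auto simp: less_top[symmetric])
    have ci: "integrable M (\<lambda>x. c x * indicator A x)" using integrable_real_mult_indicator[OF A cint] .
    have "(\<integral>x. c x * indicator A x \<partial>M) \<le> (\<integral>x. indicator A x \<partial>M)"
    proof (rule field_le_epsilon)
      fix e :: real assume e: "0 < e"
      obtain n where n: "\<bar>(\<integral>x. cs n x * indicator A x \<partial>M) - (\<integral>x. c x * indicator A x \<partial>M)\<bar> < e"
        using wsg[OF gi e] by blast
      have cni: "integrable M (\<lambda>x. cs n x * indicator A x)"
        using integrable_real_mult_indicator[OF A integrable_const_bound[of "\<lambda>x. cs n x" 1]] csb csm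
        by (auto simp: abs_le_iff)
      have "(\<integral>x. cs n x * indicator A x \<partial>M) \<le> (\<integral>x. indicator A x \<partial>M)"
        using csb by (intro integral_mono[OF cni gi]) (auto simp: indicator_def)
      then show "(\<integral>x. c x * indicator A x \<partial>M) \<le> (\<integral>x. indicator A x \<partial>M) + e" using n by linarith
    qed
    then have "(\<integral>x. (c x - 1) * indicator A x \<partial>M) \<le> 0"
      using ci gi by (simp add: left_diff_distrib Bochner_Integration.integral_diff)
    moreover have "0 \<le> (\<integral>x. (c x - 1) * indicator A x \<partial>M)"
      by (intro Bochner_Integration.integral_nonneg) (auto simp: A_def indicator_def sp)
    ultimately have "(\<integral>x. (c x - 1) * indicator A x \<partial>M) = 0" by simp
    moreover have "integrable M (\<lambda>x. (c x - 1) * indicator A x)"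
      using ci gi by (simp add: left_diff_distrib)
    moreover have "AE x in M. 0 \<le> (c x - 1) * indicator A x" by (auto simp: A_def indicator_def sp)
    ultimately have "AE x in M. (c x - 1) * indicator A x = 0"
      using integral_nonneg_eq_0_iff_AE[of M "\<lambda>x. (c x - 1) * indicator A x"] by auto
    then show ?thesis by eventually_elim (auto simp: A_def indicator_def sp split: if_splits)
  qed
  define c' where "c' x = max 0 (min 1 (c x))" for x
  have c'm: "c' \<in> borel_measurable M" unfolding c'_def by measurable
  have c'b: "0 \<le> c' s \<and> c' s \<le> 1" for s unfolding c'_def by auto
  have ae: "AE x in M. c' x = c x" using cge cle by eventually_elim (auto simp: c'_def)
  have ws': "\<And>G e N. finite G \<Longrightarrow> (\<forall>g\<in>G. integrable M g) \<Longrightarrow> 0 < e \<Longrightarrow>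
               \<exists>n\<ge>N. \<forall>g\<in>G. \<bar>(\<integral>x. cs n x * g x \<partial>M) - (\<integral>x. c' x * g x \<partial>M)\<bar> < e"
  proof -
    fix G :: "('a \<Rightarrow> real) set" and e :: real and N :: nat assume G: "finite G" "\<forall>g\<in>G. integrable M g" "0 < e"
    have eq: "(\<integral>x. c' x * g x \<partial>M) = (\<integral>x. c x * g x \<partial>M)" if "g \<in> G" for g :: "'a \<Rightarrow> real"
    proof (rule integral_cong_AE)
      have gm: "g \<in> borel_measurable M" using G(2) that by auto
      show "(\<lambda>x. c' x * g x) \<in> borel_measurable M" using c'm gm by measurable
      show "(\<lambda>x. c x * g x) \<in> borel_measurable M" using gm by measurable
      show "AE x in M. c' x * g x = c x * g x" using ae by eventually_elim simp
    qed
    show "\<exists>n\<ge>N. \<forall>g\<in>G. \<bar>(\<integral>x. cs n x * g x \<partial>M) - (\<integral>x. c' x * g x \<partial>M)\<bar> < e"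
      using ws[OF G] eq by auto
  qed
  have rect: "0 \<le> (\<integral>x. (\<Prod>e\<in>E. W (x (fst e)) (x (snd e))) * (\<Prod>j<k. indicator (X j) (x j)) * ((\<Sum>i<k. c' (x i)) - 1) \<partial>?P)"
    if "\<And>j. j < k \<Longrightarrow> X j \<in> sets M" for X
    by (rule rect_nonneg[OF M sp E Wsm Wsb Wm Wb assms(7) csm csb cov c'm c'b ws' that k0])
  have "emeasure ?P {x\<in>space ?P. (\<Prod>e\<in>E. W (x (fst e)) (x (snd e))) \<noteq> 0 \<and> (\<Sum>i<k. c' (x i)) < 1} = 0"
    by (rule cover_from_rect[OF M sp E Wm Wb c'm c'b k0 rect])
  then have "frac_cover M k E W c'"
    unfolding frac_cover_def hom_eq using c'm c'b by auto
  then show ?thesis using ae by blast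
qed


end
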